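(* Let $\Delta\ge3$ be an integer, and for a positive integer $d$, $K\in(0,1)$ and an angle $\phi$ let \[f(d,K,\phi)=\max\Big(2\sin(\phi/2),\ \sqrt{1+(1+K)^{-2d}-2\cos(\phi)(1+K)^{-d}}\Big).\] Suppose $k>\Delta$ is an integer and $0<\varepsilon<1$ are such that there exists $K\in(0,1)$ with $\theta:=\arcsin(K)\in\big(0,\frac{\pi}{3(\Delta-1+\varepsilon)}\big)$ satisfying, with $b:=\Delta-d$, \[\frac{(1+\varepsilon)^2(1+K)^d}{\cos((d+b\varepsilon)\theta/2)(k-b)-\varepsilon b(1+K)^d}\le K\quad\text{for } d=0,\dots,\Delta-2,\] \[\frac{(1+\varepsilon)(1+K)^d}{\cos((d+b\varepsilon)\theta/2)(k-b)-\varepsilon b(1+K)^d}\le \frac{K}{f(d,K,(d+b\varepsilon)\theta)}\quad\text{for } d=0,\dots,\Delta-1.\] Let $G=(V,E)$ be any graph of maximum degree at most $\Delta$ and $(w_e)_{e\in E}$ complex weights such that for each $e$ either (i) $|w_e|\le\varepsilon$, or (ii) $|\arg(w_e)|\le\varepsilon\theta$ and $\varepsilon<|w_e|\le1$. Then, with $\mathbf{Z}^W_L(G)$ the restricted partition function with $k$ colours and these weights: (A') For every list $W$ of distinct vertices forming a leaf-independent set and every colour list $L$ with $|L|=|W|$, $\mathbf{Z}^W_L(G)\ne0$. (B') For every list $W=W'u$ of distinct vertices forming a leaf-independent set and any colour lists $L'\ell$, $L'\ell'$ of length $|W|$: (i) the angle between $\mathbf{Z}^{W'u}_{L'\ell}(G)$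 and $\mathbf{Z}^{W'u}_{L'\ell'}(G)$ is at most $\theta$; (ii) $|\mathbf{Z}^{W'u}_{L'\ell}(G)|/|\mathbf{Z}^{W'u}_{L'\ell'}(G)|\le1+K$. (C') For every list $W=W'u$ of distinct vertices with $W'$ a leaf-independent set in $G$, and every colour list $L'$ of length $|W'|$: let $\mathcal{G},\mathcal{N}$ be the sets of good and neutral colours for $u$ with respect to $(G,W',L',\varepsilon)$, $d$ the number of free neighbours of $u$, $b=\Delta-d$, and $m(\ell)$ the number of fixed bad neighbours of $u$ with pre-assigned colour $\ell$. Then (i) $\mathbf{Z}^{W'u}_{L'\ell}(G)\ne0$ for all $\ell\in\mathcal{G}\cup\mathcal{N}$; (ii) for all $\ell,\ell'\in\mathcal{G}\cup\mathcal{N}$ the angle between $\mathbf{Z}^{W'u}_{L'\ell}(G)$ and $\mathbf{Z}^{W'u}_{L'\ell'}(G)$ is at most $(d+b\varepsilon)\theta$; (iii) for all $\ell\in[k]$ and $j\in\mathcal{G}$, $|\mathbf{Z}^{W'u}_{L'\ell}(G)|/|\mathbf{Z}^{W'u}_{L'j}(G)|\le\varepsilon^{m(\ell)}(1+K)^d$.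
   Context: Graphs are simple; $[k]=\{1,\dots,k\}$. For a graph $G=(V,E)$ with complex edge weights $(w_e)$, a list $W=w_1\dots w_m$ of distinct vertices and a list $L=\ell_1\dots\ell_m$ of colours in $[k]$, the restricted partition function is \[\mathbf{Z}^W_L(G)=\sum_{\phi:V\to[k],\ \phi(w_i)=\ell_i\ \forall i}\ \prod_{uv\in E,\ \phi(u)=\phi(v)} w_{uv}.\] $W'u$ and $L'\ell$ denote concatenation of lists. Vertices in $W$ are called fixed (with colour given by $L$); other vertices are free. A set $W\subseteq V$ is leaf-independent if it is an independent set and every vertex in $W$ has degree exactly $1$. Given $\varepsilon>0$, a neighbour $v$ of $u$ is a bad neighbour if $|w_{uv}|\le\varepsilon$. A colour $\ell$ is good for $u$ if no fixed neighbour of $u$ has colour $\ell$; bad if $u$ has at least one fixed bad neighbour coloured $\ell$; neutral if neither good nor bad. Angles between non-zero complex numbers are taken in $[0,\pi]$. *)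

theory Defs
  imports "HOL-Analysis.Analysis"
begin

definition simple_graph :: "'a set \<Rightarrow> ('a \<Rightarrow> 'a \<Rightarrow> bool) \<Rightarrow> bool" where
  "simple_graph V E \<longleftrightarrow> finite V \<and> (\<forall>u v. E u v \<longrightarrow> u \<in> V \<and> v \<in> V \<and> u \<noteq> v \<and> E v u)"

definition edges :: "'a set \<Rightarrow> ('a \<Rightarrow> 'a \<Rightarrow> bool) \<Rightarrow> 'a set set" where
  "edges V E = {{u, v} | u v. u \<in> V \<and> v \<in> V \<and> E u v}"

definition nbrs :: "'a set \<Rightarrow> ('a \<Rightarrow> 'a \<Rightarrow> bool) \<Rightarrow> 'a \<Rightarrow> 'a set" where
  "nbrs V E u = {v \<in> V. E u v}"

definition max_deg_le :: "'a set \<Rightarrow> ('a \<Rightarrow> 'a \<Rightarrow> bool) \<Rightarrow> nat \<Rightarrow> bool" where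
  "max_deg_le V E \<Delta> \<longleftrightarrow> (\<forall>v \<in> V. card (nbrs V E v) \<le> \<Delta>)"

definition leaf_independent :: "'a set \<Rightarrow> ('a \<Rightarrow> 'a \<Rightarrow> bool) \<Rightarrow> 'a set \<Rightarrow> bool" where
  "leaf_independent V E W \<longleftrightarrow>
     W \<subseteq> V \<and> (\<forall>u \<in> W. \<forall>v \<in> W. \<not> E u v) \<and> (\<forall>u \<in> W. card (nbrs V E u) = 1)"

definition Zr :: "'a set \<Rightarrow> ('a \<Rightarrow> 'a \<Rightarrow> bool) \<Rightarrow> ('a set \<Rightarrow> complex) \<Rightarrow> nat
                  \<Rightarrow> 'a list \<Rightarrow> nat list \<Rightarrow> complex" where
  "Zr V E w k W L =
     (\<Sum>\<phi> \<in> {\<phi> \<in> V \<rightarrow>\<^sub>E {1..k}. \<forall>i < length W. \<phi> (W ! i) = L ! i}.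
        \<Prod>e \<in> edges V E. if (\<forall>x \<in> e. \<forall>y \<in> e. \<phi> x = \<phi> y) then w e else 1)"

definition cangle :: "complex \<Rightarrow> complex \<Rightarrow> real" where
  "cangle z y = arccos (Re (z * cnj y) / (cmod z * cmod y))"

definition fcol :: "'a list \<Rightarrow> nat list \<Rightarrow> 'a \<Rightarrow> nat" where
  "fcol W L v = the (map_of (zip W L) v)"

definition good_cols :: "'a set \<Rightarrow> ('a \<Rightarrow> 'a \<Rightarrow> bool) \<Rightarrow> nat \<Rightarrow> 'a list \<Rightarrow> nat list \<Rightarrow> 'a \<Rightarrow> nat set" where
  "good_cols V E k W L u = {l \<in> {1..k}. \<forall>v \<in> set W. E u v \<longrightarrow> fcol W L v \<noteq> l}"

definition bad_cols :: "'a set \<Rightarrow> ('a \<Rightarrow> 'a \<Rightarrow> bool) \<Rightarrow> ('a set \<Rightarrow> complex) \<Rightarrow> real \<Rightarrow> nat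
                        \<Rightarrow> 'a list \<Rightarrow> nat list \<Rightarrow> 'a \<Rightarrow> nat set" where
  "bad_cols V E w \<epsilon> k W L u =
     {l \<in> {1..k}. \<exists>v \<in> set W. E u v \<and> cmod (w {u, v}) \<le> \<epsilon> \<and> fcol W L v = l}"

definition neutral_cols :: "'a set \<Rightarrow> ('a \<Rightarrow> 'a \<Rightarrow> bool) \<Rightarrow> ('a set \<Rightarrow> complex) \<Rightarrow> real \<Rightarrow> nat
                        \<Rightarrow> 'a list \<Rightarrow> nat list \<Rightarrow> 'a \<Rightarrow> nat set" where
  "neutral_cols V E w \<epsilon> k W L u = {1..k} - good_cols V E k W L u - bad_cols V E w \<epsilon> k W L u"

definition mbad :: "'a set \<Rightarrow> ('a \<Rightarrow> 'a \<Rightarrow> bool) \<Rightarrow> ('a set \<Rightarrow> complex) \<Rightarrow> real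
                    \<Rightarrow> 'a list \<Rightarrow> nat list \<Rightarrow> 'a \<Rightarrow> nat \<Rightarrow> nat" where
  "mbad V E w \<epsilon> W L u l =
     card {v \<in> set W. E u v \<and> cmod (w {u, v}) \<le> \<epsilon> \<and> fcol W L v = l}"

definition free_deg :: "'a set \<Rightarrow> ('a \<Rightarrow> 'a \<Rightarrow> bool) \<Rightarrow> 'a list \<Rightarrow> 'a \<Rightarrow> nat" where
  "free_deg V E W u = card {v \<in> V. E u v \<and> v \<notin> set W}"

definition fbound :: "nat \<Rightarrow> real \<Rightarrow> real \<Rightarrow> real" where
  "fbound d K \<phi> = max (2 * sin (\<phi> / 2))
      (sqrt (1 + 1 / (1 + K) ^ (2 * d) - 2 * cos \<phi> / (1 + K) ^ d))"

end

theory Submission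
  imports Defs
begin

lemma rcis_diff_sq:
  "(cmod (rcis r1 a1 - rcis r2 a2))\<^sup>2 = r1\<^sup>2 + r2\<^sup>2 - 2*r1*r2*cos (a1 - a2)"
  using cmod_diff_squared[of r1 a1 r2 a2] by (simp add: rcis_def cis_conv_exp)

lemma pi3_diff:
  assumes "0 \<le> r1" "0 \<le> r2" "r1 \<le> R" "r2 \<le> R" "\<bar>a1 - a2\<bar> \<le> pi/3"
  shows "cmod (rcis r1 a1 - rcis r2 a2) \<le> R"
proof -
  have "cos (pi/3) \<le> cos \<bar>a1 - a2\<bar>"
    by (rule cos_monotone_0_pi_le) (use assms(5) in auto)
  hence c: "1/2 \<le> cos (a1 - a2)" by (simp add: cos_60)
  have "r1*r2 \<le> 2*r1*r2*cos (a1 - a2)"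
    using mult_left_mono[OF c, of "2*r1*r2"] assms by simp
  hence "(cmod (rcis r1 a1 - rcis r2 a2))\<^sup>2 \<le> r1\<^sup>2 + r2\<^sup>2 - r1*r2"
    by (simp add: rcis_diff_sq)
  also have "\<dots> \<le> R\<^sup>2"
  proof (cases "r1 \<le> r2")
    case True
    hence "r1\<^sup>2 \<le> r1*r2" by (simp add: power2_eq_square assms mult_left_mono)
    moreover have "r2\<^sup>2 \<le> R\<^sup>2" using assms by (simp add: power_mono)
    ultimately show ?thesis by simp
  next
    case False
    hence "r2\<^sup>2 \<le> r1*r2" by (simp add: power2_eq_square assms mult_right_mono)
    moreover have "r1\<^sup>2 \<le> R\<^sup>2" using assms by (simp add: power_mono)
    ultimately show ?thesis by simp
  qed
  finally show ?thesis
    using assms by (meson power2_le_imp_le order_trans)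
qed

lemma max_sq:
  fixes a b :: real assumes "0 \<le> a" "0 \<le> b"
  shows "max (a\<^sup>2) (b\<^sup>2) = (max a b)\<^sup>2"
proof (cases "a \<le> b")
  case True thus ?thesis using assms power_mono[OF True, of 2] by (simp add: max_def)
next
  case False thus ?thesis using assms power_mono[of b a 2] by (simp add: max_def)
qed

lemma fb_diff:
  assumes r0: "0 < r0" "r0 \<le> 1" and "0 < r2" "r0 * r2 \<le> r1" "r1 \<le> r2"
    and ph: "\<bar>a1 - a2\<bar> \<le> phi" "phi \<le> pi"
  shows "cmod (rcis r1 a1 - rcis r2 a2)
     \<le> r2 * max (2 * sin (phi/2)) (sqrt (1 + r0\<^sup>2 - 2*r0*cos phi))"
proof -
  define t where "t = r1 / r2"
  have t: "r0 \<le> t" "t \<le> 1" using assms by (auto simp: t_def field_simps)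
  have r1: "r1 = t * r2" using assms by (simp add: t_def)
  have "cos phi \<le> cos \<bar>a1 - a2\<bar>"
    by (rule cos_monotone_0_pi_le) (use ph in auto)
  hence c: "cos phi \<le> cos (a1 - a2)" by simp
  define h where "h x = 1 + x\<^sup>2 - 2*x*cos phi" for x
  have "(cmod (rcis r1 a1 - rcis r2 a2))\<^sup>2 = r2\<^sup>2 * (1 + t\<^sup>2 - 2*t*cos (a1-a2))"
    unfolding rcis_diff_sq r1 by (simp add: power2_eq_square algebra_simps)
  also have "\<dots> \<le> r2\<^sup>2 * h t"
    using c t r0 by (auto simp: h_def intro!: mult_left_mono)
  also have "h t \<le> max (h r0) (h 1)"
  proof -
    have conv: "h t \<le> ((1 - t)/(1-r0)) * h r0 + ((t - r0)/(1 - r0)) * h 1" if "r0 < 1"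
    proof -
      have e: "(1-t)*h r0 + (t-r0)*h 1 - (1-r0)*h t = (1-r0)*((1-t)*(t-r0))"
        by (simp add: h_def power2_eq_square algebra_simps)
      have nz: "1 - r0 \<noteq> 0" using that by simp
      have "((1 - t)/(1-r0)) * h r0 + ((t - r0)/(1 - r0)) * h 1 - h t
          = ((1-t)*h r0)/(1-r0) + ((t-r0)*h 1)/(1-r0) - ((1-r0)*h t)/(1-r0)"
        using nz by simp
      also have "\<dots> = ((1-t)*h r0 + (t-r0)*h 1 - (1-r0)*h t) / (1-r0)"
        by (simp only: add_divide_distrib[symmetric] diff_divide_distrib[symmetric])
      also have "\<dots> = (1-t)*(t-r0)" using that by (simp add: e)
      finally have "((1 - t)/(1-r0)) * h r0 + ((t - r0)/(1 - r0)) * h 1 - h t = (1-t)*(t-r0)" .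
      moreover have "(1-t)*(t-r0) \<ge> 0" using t by simp
      ultimately show ?thesis by linarith
    qed
    show ?thesis
    proof (cases "r0 < 1")
      case True
      have a: "0 \<le> (1 - t)/(1-r0)" "0 \<le> (t - r0)/(1 - r0)" using t True by auto
      have s: "(1 - t)/(1-r0) + (t - r0)/(1 - r0) = 1" using True by (simp add: field_simps)
      have "((1 - t)/(1-r0)) * h r0 + ((t - r0)/(1 - r0)) * h 1 \<le>
            ((1 - t)/(1-r0)) * max (h r0) (h 1) + ((t - r0)/(1 - r0)) * max (h r0) (h 1)"
        by (intro add_mono mult_left_mono a) auto
      also have "\<dots> = max (h r0) (h 1)" using s by (metis distrib_right mult_1)
      finally show ?thesis using conv[OF True] by linarith
    next
      case False
      hence "t = 1" "r0 = 1" using t r0 by auto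
      thus ?thesis by simp
    qed
  qed
  hence "r2\<^sup>2 * h t \<le> r2\<^sup>2 * max (h r0) (h 1)" by (simp add: mult_left_mono)
  also have "max (h r0) (h 1) = (max (2 * sin (phi/2)) (sqrt (1 + r0\<^sup>2 - 2*r0*cos phi)))\<^sup>2"
  proof -
    have h1: "h 1 = (2 * sin (phi/2))\<^sup>2"
    proof -
      have "cos phi = 1 - 2 * (sin (phi/2))\<^sup>2"
        using cos_double_sin[of "phi/2"] by simp
      thus ?thesis by (simp add: h_def power2_eq_square)
    qed
    have hr: "h r0 \<ge> 0"
    proof -
      have "cos phi \<le> 1" by simp
      hence "2*r0*cos phi \<le> 2*r0" using r0 by simp
      moreover have "(1 - r0)\<^sup>2 \<ge> 0" by simp
      ultimately show ?thesis unfolding h_def by (simp add: power2_eq_square algebra_simps)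
    qed
    have s0: "0 \<le> sin (phi/2)"
      by (intro sin_ge_zero) (use ph in \<open>auto\<close>)
    have sq: "sqrt (h r0) ^ 2 = h r0" using hr by simp
    have "max (h r0) (h 1) = max (sqrt (h r0)^2) ((2 * sin (phi/2))\<^sup>2)" using h1 sq by (simp add: max.commute)
    also have "\<dots> = (max (sqrt (h r0)) (2 * sin (phi/2)))\<^sup>2"
      using s0 hr max_sq[of "sqrt (h r0)" "2 * sin (phi/2)"] by simp
    finally show ?thesis by (simp add: h_def max.commute)
  qed
  finally have "(cmod (rcis r1 a1 - rcis r2 a2))\<^sup>2 \<le>
      (r2 * max (2 * sin (phi/2)) (sqrt (1 + r0\<^sup>2 - 2*r0*cos phi)))\<^sup>2"
    by (simp add: power_mult_distrib)
  moreover have "0 \<le> r2 * max (2 * sin (phi/2)) (sqrt (1 + r0\<^sup>2 - 2*r0*cos phi))"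
    by (intro mult_nonneg_nonneg) (use assms in \<open>auto intro!: max.coboundedI1 sin_ge_zero\<close>)
  ultimately show ?thesis using power2_le_imp_le by blast
qed

lemma cone_sum:
  assumes "finite I" "\<And>i. i \<in> I \<Longrightarrow> 0 \<le> r i"
    and "\<And>i j. i \<in> I \<Longrightarrow> j \<in> I \<Longrightarrow> \<bar>a i - a j\<bar> \<le> bt" "bt \<le> pi"
  shows "cos (bt/2) * (\<Sum>i\<in>I. r i) \<le> cmod (\<Sum>i\<in>I. rcis (r i) (a i))"
proof (cases "I = {}")
  case True thus ?thesis by simp
next
  case ne: False
  define M where "M = Max (a ` I)"
  define m where "m = Min (a ` I)"
  have "M \<in> a ` I" unfolding M_def by (intro Max_in) (use assms(1) ne in \<open>auto\<close>)
  then obtain iM where iM: "iM \<in> I" "a iM = M" by auto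
  have "m \<in> a ` I" unfolding m_def by (intro Min_in) (use assms(1) ne in \<open>auto\<close>)
  then obtain im where im: "im \<in> I" "a im = m" by auto
  have bnd: "m \<le> a i \<and> a i \<le> M" if "i \<in> I" for i
    using that assms(1) by (auto simp: M_def m_def)
  have Mm: "M - m \<le> bt" using assms(3)[OF iM(1) im(1)] iM im by simp
  define A where "A = (M + m)/2"
  have c: "cos (bt/2) \<le> cos (a i - A)" if "i \<in> I" for i
  proof -
    have b1: "m \<le> a i" "a i \<le> M" using bnd[OF that] by auto
    have ab: "\<bar>a i - A\<bar> \<le> bt/2" using b1 Mm unfolding A_def by (simp add: abs_le_iff field_simps)
    have pb: "bt/2 \<le> pi" using assms(4) pi_gt_zero by linarith
    have "cos (bt/2) \<le> cos \<bar>a i - A\<bar>"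
      by (rule cos_monotone_0_pi_le[OF abs_ge_zero ab pb])
    thus ?thesis by simp
  qed
  have "cos (bt/2) * (\<Sum>i\<in>I. r i) = (\<Sum>i\<in>I. r i * cos (bt/2))"
    by (simp add: sum_distrib_right mult.commute)
  also have "\<dots> \<le> (\<Sum>i\<in>I. r i * cos (a i - A))"
    by (intro sum_mono mult_left_mono c assms(2))
  also have "\<dots> = Re ((\<Sum>i\<in>I. rcis (r i) (a i)) * cis (- A))"
    by (simp add: sum_distrib_right Re_sum rcis_def cis_mult[symmetric] mult.assoc)
       (simp add: cos_diff)
  also have "\<dots> \<le> cmod ((\<Sum>i\<in>I. rcis (r i) (a i)) * cis (- A))"
    by (rule complex_Re_le_cmod)
  also have "\<dots> = cmod (\<Sum>i\<in>I. rcis (r i) (a i))" by (simp add: norm_mult)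
  finally show ?thesis .
qed

lemma cangle_rcis:
  assumes "0 < r1" "0 < r2" "\<bar>a1 - a2\<bar> \<le> pi"
  shows "cangle (rcis r1 a1) (rcis r2 a2) = \<bar>a1 - a2\<bar>"
proof -
  have "rcis r1 a1 * cnj (rcis r2 a2) = rcis (r1*r2) (a1 - a2)"
    by (simp add: rcis_def cis_cnj cis_mult[symmetric] algebra_simps)
       (metis cis_cnj cis_mult diff_conv_add_uminus mult.commute)
  thus ?thesis using assms
    by (simp add: cangle_def Re_rcis arccos_cos_eq_abs)
qed

lemma arcsin_disc:
  assumes K: "0 < K" "K < 1" and q: "cmod (q - 1) \<le> K"
  shows "q \<noteq> 0" "\<bar>Arg q\<bar> \<le> arcsin K" "cmod q \<le> 1 + K"
proof -
  have "cmod q \<le> cmod (q - 1) + 1" by (metis norm_triangle_sub add.commute norm_one)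
  thus "cmod q \<le> 1 + K" using q by simp
  have re: "Re q \<ge> 1 - K"
    using q abs_Re_le_cmod[of "q - 1"] by auto
  hence rp: "Re q > 0" using K by simp
  thus qnz: "q \<noteq> 0" by auto
  have "(cmod (q-1))\<^sup>2 \<le> K\<^sup>2" using q by (simp add: power_mono)
  moreover have "(cmod (q-1))\<^sup>2 = (Re q - 1)\<^sup>2 + (Im q)\<^sup>2" by (simp add: cmod_power2)
  ultimately have "(Re q - 1)\<^sup>2 + (Im q)\<^sup>2 \<le> K\<^sup>2" by simp
  hence key: "(Im q)\<^sup>2 \<le> K\<^sup>2 * (cmod q)\<^sup>2"
  proof -
    assume h: "(Re q - 1)\<^sup>2 + (Im q)\<^sup>2 \<le> K\<^sup>2"
    have "0 \<le> (Re q - 1 + K\<^sup>2)\<^sup>2" by simp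
    have "(Im q)\<^sup>2 * (1 - K\<^sup>2) \<le> (K\<^sup>2 - (Re q - 1)\<^sup>2) * (1 - K\<^sup>2)"
      by (intro mult_right_mono) (use h K in \<open>auto simp: power_le_one\<close>)
    also have "\<dots> \<le> K\<^sup>2 * (Re q)\<^sup>2"
      using \<open>0 \<le> (Re q - 1 + K\<^sup>2)\<^sup>2\<close> by (simp add: power2_eq_square algebra_simps)
    finally have "(Im q)\<^sup>2 * (1 - K\<^sup>2) \<le> K\<^sup>2 * (Re q)\<^sup>2" .
    thus ?thesis by (simp add: cmod_power2 algebra_simps)
  qed
  have arg: "\<bar>Arg q\<bar> < pi/2"
  proof -
    have "Re q = cmod q * cos (Arg q)"
      by (metis Re_rcis rcis_cmod_Arg)
    hence "cos (Arg q) > 0" using rp qnz by (simp add: zero_less_mult_iff)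
    hence "cos \<bar>Arg q\<bar> > 0" by simp
    moreover have "\<bar>Arg q\<bar> \<le> pi" using Arg_correct[OF qnz] by auto
    ultimately show ?thesis
    proof -
      assume c: "cos \<bar>Arg q\<bar> > 0" and p: "\<bar>Arg q\<bar> \<le> pi"
      show ?thesis
      proof (rule ccontr)
        assume "\<not> \<bar>Arg q\<bar> < pi/2"
        hence "pi/2 \<le> \<bar>Arg q\<bar>" by simp
        hence "cos \<bar>Arg q\<bar> \<le> cos (pi/2)"
          using p by (intro cos_monotone_0_pi_le) auto
        thus False using c by simp
      qed
    qed
  qed
  have "Im q = cmod q * sin (Arg q)" by (metis Im_rcis rcis_cmod_Arg)
  hence "(sin (Arg q))\<^sup>2 \<le> K\<^sup>2"
    using key qnz by (simp add: power_mult_distrib mult.commute)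
  hence "\<bar>sin (Arg q)\<bar> \<le> K" using K power2_le_imp_le[of "\<bar>sin (Arg q)\<bar>" K] by simp
  moreover have "sin \<bar>Arg q\<bar> \<le> \<bar>sin (Arg q)\<bar>" by (cases "Arg q < 0") auto
  ultimately have s: "sin \<bar>Arg q\<bar> \<le> K" by linarith
  have "\<bar>Arg q\<bar> = arcsin (sin \<bar>Arg q\<bar>)" using arg by (simp add: arcsin_sin)
  also have "\<dots> \<le> arcsin K" by (rule arcsin_le_arcsin[OF _ s]) (use K in auto)
  finally show "\<bar>Arg q\<bar> \<le> arcsin K" .
qed

lemma cis_eq_int:
  assumes "cis a = cis b" shows "\<exists>m::int. a = b + 2*pi*m"
proof -
  have "sin a = sin b \<and> cos a = cos b" using assms by (metis cis.sel)
  thus ?thesis using sin_cos_eq_iff by blast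
qed



locale prm =
  fixes \<Delta> k :: nat and \<epsilon> K \<theta> :: real
  assumes Delta: "\<Delta> \<ge> 3"
    and k_gt: "k > \<Delta>"
    and eps: "0 < \<epsilon>" "\<epsilon> < 1"
    and K: "0 < K" "K < 1"
    and theta_def: "\<theta> = arcsin K"
    and theta_range: "0 < \<theta>" "\<theta> < pi / (3 * (real \<Delta> - 1 + \<epsilon>))"
    and cond1: "\<And>d. d \<le> \<Delta> - 2 \<Longrightarrow>
        (let b = real \<Delta> - real d;
             den = cos ((real d + b * \<epsilon>) * \<theta> / 2) * (real k - b) - \<epsilon> * b * (1 + K) ^ d
         in den \<noteq> 0 \<and> (1 + \<epsilon>)\<^sup>2 * (1 + K) ^ d / den \<le> K)"
    and cond2: "\<And>d. d \<le> \<Delta> - 1 \<Longrightarrow>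
        (let b = real \<Delta> - real d;
             den = cos ((real d + b * \<epsilon>) * \<theta> / 2) * (real k - b) - \<epsilon> * b * (1 + K) ^ d
         in den \<noteq> 0 \<and> fbound d K ((real d + b * \<epsilon>) * \<theta>) \<noteq> 0 \<and>
            (1 + \<epsilon>) * (1 + K) ^ d / den \<le> K / fbound d K ((real d + b * \<epsilon>) * \<theta>))"
begin

definition den :: "nat \<Rightarrow> real" where
  "den d = cos ((real d + (real \<Delta> - real d) * \<epsilon>) * \<theta> / 2) * (real k - (real \<Delta> - real d))
           - \<epsilon> * (real \<Delta> - real d) * (1 + K) ^ d"

definition phi :: "nat \<Rightarrow> real" where
  "phi d = (real d + (real \<Delta> - real d) * \<epsilon>) * \<theta>"

lemma sin_theta: "sin \<theta> = K"
  using K by (simp add: theta_def)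

lemma theta_le: "K \<le> \<theta>"
  using sin_x_le_x[of \<theta>] theta_range sin_theta by simp

lemma n_eps_theta: "(real \<Delta> - 1 + \<epsilon>) * \<theta> < pi / 3"
proof -
  have p: "0 < real \<Delta> - 1 + \<epsilon>" using Delta eps by simp
  have "(real \<Delta> - 1 + \<epsilon>) * \<theta> < (real \<Delta> - 1 + \<epsilon>) * (pi / (3 * (real \<Delta> - 1 + \<epsilon>)))"
    using theta_range p by (intro mult_strict_left_mono) auto
  also have "\<dots> = pi / 3" using p by (simp add: field_simps)
  finally show ?thesis .
qed

lemma Delta_theta: "real \<Delta> * \<theta> < pi / 2"
proof -
  have p: "0 < real \<Delta> - 1 + \<epsilon>" using Delta eps by simp
  have "real \<Delta> * \<theta> < real \<Delta> * (pi / (3 * (real \<Delta> - 1 + \<epsilon>)))"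
    using theta_range Delta by (intro mult_strict_left_mono) auto
  also have "\<dots> = pi * (real \<Delta> / (3 * (real \<Delta> - 1 + \<epsilon>)))" by simp
  also have "\<dots> \<le> pi * (1/2)"
  proof -
    have "real \<Delta> / (3 * (real \<Delta> - 1 + \<epsilon>)) \<le> 1/2"
      using p Delta eps by (simp add: divide_simps)
    thus ?thesis by (intro mult_left_mono) auto
  qed
  finally show ?thesis by simp
qed

lemma phi_bounds: assumes "d \<le> \<Delta>" shows "0 \<le> phi d" "phi d \<le> real \<Delta> * \<theta>"
proof -
  have "real d + (real \<Delta> - real d) * \<epsilon> \<le> real d + (real \<Delta> - real d) * 1"
    using assms eps by (intro add_left_mono mult_left_mono) auto
  thus "phi d \<le> real \<Delta> * \<theta>" unfolding phi_def using theta_range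
    by (intro mult_right_mono) auto
  show "0 \<le> phi d" unfolding phi_def using assms eps theta_range by auto
qed

lemma phi_le_n: assumes "d \<le> \<Delta> - 1" shows "phi d \<le> (real \<Delta> - 1 + \<epsilon>) * \<theta>"
proof -
  have dd: "real d \<le> real \<Delta> - 1" using assms Delta by linarith
  have "real d + (real \<Delta> - real d) * \<epsilon> = real \<Delta> * \<epsilon> + real d * (1 - \<epsilon>)"
    by (simp add: algebra_simps)
  also have "\<dots> \<le> real \<Delta> * \<epsilon> + (real \<Delta> - 1) * (1 - \<epsilon>)"
    using dd eps by (intro add_left_mono mult_right_mono) auto
  also have "\<dots> = real \<Delta> - 1 + \<epsilon>" by (simp add: algebra_simps)
  finally show ?thesis unfolding phi_def using theta_range by (intro mult_right_mono) auto
qed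

lemma X_le_3: "(1 + K) ^ (\<Delta> - 1) \<le> 3"
proof -
  define n where "n = \<Delta> - 1"
  have rn: "real n = real \<Delta> - 1" using Delta by (simp add: n_def)
  have "(1 + K) ^ n \<le> exp K ^ n"
    using K by (intro power_mono exp_ge_add_one_self) auto
  also have "\<dots> = exp (real n * K)" by (simp add: exp_of_nat_mult)
  also have "\<dots> \<le> exp (21/20)"
  proof -
    have "real n * K \<le> real n * \<theta>" using theta_le by (intro mult_left_mono) auto
    also have "\<dots> \<le> (real \<Delta> - 1 + \<epsilon>) * \<theta>" using rn eps theta_range by (intro mult_right_mono) auto
    also have "\<dots> < pi / 3" by (rule n_eps_theta)
    also have "\<dots> \<le> 21/20" using pi_approx(2) by simp
    finally show ?thesis by simp
  qed
  also have "\<dots> = exp 1 * exp (1/20)" by (simp flip: exp_add)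
  also have "\<dots> \<le> (272/100) * (1 + 1/20 + (1/20)\<^sup>2)"
    using e_less_272 exp_bound[of "1/20"] by (intro mult_mono) auto
  also have "\<dots> \<le> 3" by (simp add: power2_eq_square)
  finally show ?thesis by (simp add: n_def)
qed

lemma convex_pow:
  fixes y :: real assumes "1 \<le> y" "d \<le> n" "0 < n"
  shows "y ^ d \<le> 1 + (real d / real n) * (y ^ n - 1)"
proof -
  define t where "t = real d / real n"
  have t: "0 \<le> t" "t \<le> 1" using assms by (auto simp: t_def)
  have "y ^ d = exp (real d * ln y)" using assms by (simp add: exp_of_nat_mult)
  also have "real d * ln y = (1 - t) *\<^sub>R 0 + t *\<^sub>R (real n * ln y)"
    using assms by (simp add: t_def)
  also have "exp \<dots> \<le> (1 - t) * exp 0 + t * exp (real n * ln y)"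
    by (rule convex_onD[OF exp_convex t]) auto
  also have "exp (real n * ln y) = y ^ n" using assms by (simp add: exp_of_nat_mult)
  finally show ?thesis by (simp add: t_def algebra_simps diff_divide_distrib)
qed

lemma ineq_dy:
  fixes y :: real assumes y: "1 < y" "y ^ n \<le> 3" and d: "d \<le> n" and n: "0 < n"
  shows "real (n + 1 - d) * y ^ d < real d + real n + y ^ n"
proof (cases "d = 0")
  case True
  have "1 < y ^ n" using y n by (simp add: one_less_power)
  thus ?thesis using True by simp
next
  case False
  have c: "y ^ d \<le> 1 + (real d / real n) * (y ^ n - 1)" using convex_pow[of y d n] y d n by simp
  have nd: "0 \<le> real (n + 1 - d)" by simp
  have "real (n + 1 - d) * y ^ d \<le> real (n + 1 - d) * (1 + (real d / real n) * (y ^ n - 1))"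
    using c nd by (rule mult_left_mono)
  also have "\<dots> = real (n + 1 - d) + (y ^ n - 1) * real d * (real (n + 1 - d) / real n)"
    using n by (simp add: field_simps)
  also have "\<dots> \<le> real (n + 1 - d) + (y ^ n - 1) * real d * 1"
  proof -
    have "real (n + 1 - d) / real n \<le> 1" using False d n by (simp add: divide_simps)
    moreover have "0 \<le> (y ^ n - 1) * real d" using y by (simp add: one_le_power)
    ultimately show ?thesis by (intro add_left_mono mult_left_mono) auto
  qed
  also have "\<dots> \<le> real (n + 1 - d) + 2 * real d"
  proof -
    have "(y ^ n - 1) * real d \<le> 2 * real d" using y by (intro mult_right_mono) auto
    thus ?thesis by simp
  qed
  also have "\<dots> = real n + 1 + real d" using d by (simp add: of_nat_diff)
  also have "\<dots> < real d + real n + y ^ n"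
    using y n by (simp add: one_less_power)
  finally show ?thesis .
qed


lemma cos_phi_n: "17/20 \<le> cos (phi (\<Delta> - 1) / 2)"
proof -
  have "phi (\<Delta> - 1) \<le> (real \<Delta> - 1 + \<epsilon>) * \<theta>" by (rule phi_le_n) simp
  hence a: "phi (\<Delta> - 1) / 2 \<le> pi / 6" using n_eps_theta by simp
  have "cos (pi/6) \<le> cos (phi (\<Delta> - 1) / 2)"
    using a phi_bounds(1)[of "\<Delta> - 1"] by (intro cos_monotone_0_pi_le) auto
  moreover have "17/10 \<le> sqrt 3" by (rule real_le_rsqrt) (simp add: power2_eq_square)
  ultimately show ?thesis by (simp add: cos_30)
qed

lemma den_n_eq: "den (\<Delta> - 1) = cos (phi (\<Delta> - 1) / 2) * (real k - 1) - \<epsilon> * (1 + K) ^ (\<Delta> - 1)"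
proof -
  have b1: "real \<Delta> - real (\<Delta> - 1) = 1" using Delta by simp
  show ?thesis unfolding den_def phi_def b1 by simp
qed

lemma den_n_pos: "0 < den (\<Delta> - 1)"
proof -
  have c: "17/20 \<le> cos (phi (\<Delta> - 1) / 2)" by (rule cos_phi_n)
  have k1: "real \<Delta> \<le> real k - 1" using k_gt by simp
  have ck: "17/20 * real \<Delta> \<le> cos (phi (\<Delta> - 1) / 2) * (real k - 1)"
    using c k1 Delta by (intro mult_mono) auto
  have X0: "0 \<le> (1 + K) ^ (\<Delta> - 1)" using K by simp
  have eX: "\<epsilon> * (1 + K) ^ (\<Delta> - 1) \<le> (1 + K) ^ (\<Delta> - 1)"
    using eps X0 by (simp add: mult_left_le_one_le)
  show ?thesis
  proof (cases "\<Delta> = 3")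
    case True
    have a1: "(2 + \<epsilon>) * \<theta> < pi / 3" using n_eps_theta True by simp
    have a2: "2 * \<theta> \<le> (2 + \<epsilon>) * \<theta>" using eps theta_range by simp
    have "2 * \<theta> < pi / 3" using a1 a2 by linarith
    hence "K < 5236/10000" using theta_le pi_approx(2) by simp
    hence "(1 + K) ^ 2 \<le> (1 + 5236/10000) ^ 2" using K by (intro power_mono) auto
    hence "(1 + K) ^ (\<Delta> - 1) \<le> 24/10" using True by (simp add: power2_eq_square)
    thus ?thesis using ck eX True unfolding den_n_eq by simp
  next
    case False
    hence "4 \<le> real \<Delta>" using Delta by simp
    thus ?thesis using ck eX X_le_3 unfolding den_n_eq by simp
  qed
qed

lemma fbound_ge: assumes "1 \<le> X" "X = (1 + K) ^ d"
  shows "1 - 1 / X \<le> fbound d K p"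
proof -
  have X2: "(1 + K) ^ (2 * d) = X\<^sup>2" using assms by (simp add: power_mult power2_eq_square mult.commute power_mult_distrib)
  have Xp: "0 < X" using assms by simp
  have "2 * cos p / X \<le> 2 / X" by (rule divide_right_mono) (use Xp in auto)
  moreover have "(1 - 1/X)\<^sup>2 = 1 + 1 / X\<^sup>2 - 2 / X"
    using Xp by (simp add: power2_eq_square field_simps)
  ultimately have "(1 - 1/X)\<^sup>2 \<le> 1 + 1 / X\<^sup>2 - 2 * cos p / X" by linarith
  hence "sqrt ((1 - 1/X)\<^sup>2) \<le> sqrt (1 + 1 / X\<^sup>2 - 2 * cos p / X)"
    by (rule real_sqrt_le_mono)
  moreover have "sqrt ((1 - 1/X)\<^sup>2) = 1 - 1/X" using assms by simp
  ultimately show ?thesis unfolding fbound_def X2 assms(2)[symmetric] by simp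
qed

lemma den_n_big: "(1 + \<epsilon>) * (real \<Delta> - 1) \<le> den (\<Delta> - 1)"
proof -
  define X where "X = (1 + K) ^ (\<Delta> - 1)"
  define f where "f = fbound (\<Delta> - 1) K ((real (\<Delta> - 1) + (real \<Delta> - real (\<Delta> - 1)) * \<epsilon>) * \<theta>)"
  have c2: "den (\<Delta> - 1) \<noteq> 0 \<and> f \<noteq> 0 \<and> (1 + \<epsilon>) * X / den (\<Delta> - 1) \<le> K / f"
    using cond2[of "\<Delta> - 1"] unfolding den_def f_def X_def Let_def by simp
  have X1: "1 \<le> X" using K by (simp add: X_def one_le_power)
  have f1: "1 - 1 / X \<le> f" unfolding f_def by (rule fbound_ge[OF X1]) (simp add: X_def)
  have "0 \<le> 1 - 1 / X" using X1 by (simp add: divide_simps)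
  hence f0: "0 \<le> f" using f1 by linarith
  hence fp: "0 < f" using c2 by simp
  have dp: "0 < den (\<Delta> - 1)" by (rule den_n_pos)
  have "(1 + \<epsilon>) * X * f \<le> K * den (\<Delta> - 1)"
    using c2 fp dp by (simp add: divide_simps mult.commute)
  moreover have "(1 + \<epsilon>) * (X - 1) \<le> (1 + \<epsilon>) * X * f"
  proof -
    have "X - 1 \<le> X * f" using f1 X1 by (simp add: divide_simps mult.commute)
    thus ?thesis using eps by (simp add: mult.assoc)
  qed
  moreover have "(real \<Delta> - 1) * K \<le> X - 1"
    using Bernoulli_inequality[of K "\<Delta> - 1"] K Delta by (simp add: X_def of_nat_diff)
  ultimately have "(1 + \<epsilon>) * ((real \<Delta> - 1) * K) \<le> K * den (\<Delta> - 1)"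
    using eps by (smt (verit, best) mult_left_mono)
  hence "((1 + \<epsilon>) * (real \<Delta> - 1)) * K \<le> den (\<Delta> - 1) * K" by (simp add: algebra_simps)
  thus ?thesis using K by simp
qed

lemma den_pos: assumes "d \<le> \<Delta>" shows "0 < den d"
proof (cases "d = \<Delta>")
  case True
  have "phi \<Delta> / 2 < pi / 2" using phi_bounds(2)[of \<Delta>] Delta_theta pi_gt_zero by linarith
  moreover have "0 < pi" by simp
  moreover have "-(pi/2) < phi \<Delta> / 2" using phi_bounds(1)[of \<Delta>] pi_gt_zero by linarith
  ultimately have "0 < cos (phi \<Delta> / 2)" using cos_gt_zero_pi by blast
  thus ?thesis using True k_gt unfolding den_def phi_def by simp
next
  case False
  hence d: "d \<le> \<Delta> - 1" using assms by simp
  define n where "n = \<Delta> - 1"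
  define X where "X = (1 + K) ^ n"
  define cn where "cn = cos (phi n / 2)"
  define cd where "cd = cos (phi d / 2)"
  have rn: "real n = real \<Delta> - 1" using Delta by (simp add: n_def)
  have cdn: "cn \<le> cd"
  proof -
    have "phi d \<le> phi n" using phi_le_n[OF d] unfolding phi_def n_def
      using Delta by (simp add: of_nat_diff)
    moreover have "phi n \<le> real \<Delta> * \<theta>" using phi_bounds(2)[of n] by (simp add: n_def)
    ultimately show ?thesis unfolding cn_def cd_def using phi_bounds(1)[of d] assms Delta_theta
      by (intro cos_monotone_0_pi_le) auto
  qed
  have cd1: "cd \<le> 1" by (simp add: cd_def)
  have big: "(1 + \<epsilon>) * real n + \<epsilon> * X \<le> cn * (real k - 1)"
    using den_n_big den_n_eq rn unfolding cn_def X_def n_def by simp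
  have b: "real \<Delta> - real d = real (n + 1 - d)" using d Delta by (simp add: n_def of_nat_diff)
  have bge: "1 \<le> real \<Delta> - real d" using d Delta by simp
  have dd: "den d = cd * (real k - 1) - cd * (real \<Delta> - real d - 1) - \<epsilon> * (real \<Delta> - real d) * (1 + K) ^ d"
    unfolding den_def cd_def phi_def by (simp add: algebra_simps)
  have m1: "cd * (real \<Delta> - real d - 1) \<le> real \<Delta> - real d - 1"
    using mult_right_mono[OF cd1, of "real \<Delta> - real d - 1"] bge by simp
  have m2: "cn * (real k - 1) \<le> cd * (real k - 1)"
    using mult_right_mono[OF cdn, of "real k - 1"] k_gt by simp
  have "den d \<ge> (1 + \<epsilon>) * real n + \<epsilon> * X - (real \<Delta> - real d - 1) - \<epsilon> * (real \<Delta> - real d) * (1 + K) ^ d"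
    using dd m1 m2 big by linarith
  moreover have "(1 + \<epsilon>) * real n + \<epsilon> * X - (real \<Delta> - real d - 1)
      - \<epsilon> * (real \<Delta> - real d) * (1 + K) ^ d
      \<ge> \<epsilon> * (real d + real n + X - real (n + 1 - d) * (1 + K) ^ d)"
  proof -
    have e1: "\<epsilon> * real d \<le> real d" using eps by (simp add: mult_left_le_one_le)
    have e2: "\<epsilon> * (real d + real n + X - real (n + 1 - d) * (1 + K) ^ d)
       = \<epsilon> * real d + \<epsilon> * real n + \<epsilon> * X - \<epsilon> * (real \<Delta> - real d) * (1 + K) ^ d"
      unfolding b[symmetric] by (simp add: algebra_simps)
    have e3: "(1 + \<epsilon>) * real n = real n + \<epsilon> * real n" by (simp add: algebra_simps)
    show ?thesis using e1 e2 e3 rn by linarith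
  qed
  moreover have "0 < \<epsilon> * (real d + real n + X - real (n + 1 - d) * (1 + K) ^ d)"
  proof -
    have "real (n + 1 - d) * (1 + K) ^ d < real d + real n + (1 + K) ^ n"
      using ineq_dy[of "1 + K" n d] K X_le_3 d Delta by (simp add: n_def)
    thus ?thesis using eps by (simp add: X_def)
  qed
  ultimately show ?thesis by linarith
qed

end


lemma card_set_mset_le: "card (set_mset M) \<le> size M"
proof (induction M)
  case empty thus ?case by simp
next
  case (add x M)
  have "card (set_mset (add_mset x M)) \<le> Suc (card (set_mset M))"
    by (simp add: card_insert_le_m1)
  thus ?case using add by simp
qed

lemma prod_mset_cmod_le1:
  fixes M :: "complex multiset"
  assumes "\<forall>z\<in>#M. cmod z \<le> 1" shows "cmod (prod_mset M) \<le> 1"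
  using assms
proof (induction M)
  case empty thus ?case by simp
next
  case (add x M)
  hence "cmod x \<le> 1" "cmod (prod_mset M) \<le> 1" by auto
  thus ?case by (simp add: norm_mult mult_le_one)
qed

lemma prod_mset_cmod_le_eps:
  fixes M :: "complex multiset"
  assumes "\<forall>z\<in>#M. cmod z \<le> 1" "z0 \<in># M" "cmod z0 \<le> e"
  shows "cmod (prod_mset M) \<le> e"
proof -
  obtain M' where M: "M = add_mset z0 M'" using assms(2) by (metis multi_member_split)
  have "cmod (prod_mset M') \<le> 1" using assms(1) M by (intro prod_mset_cmod_le1) auto
  hence "cmod z0 * cmod (prod_mset M') \<le> cmod z0 * 1" by (intro mult_left_mono) auto
  thus ?thesis using assms(3) M by (simp add: norm_mult)
qed

lemma prod_mset_rcis:
  fixes M :: "complex multiset"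
  assumes "\<forall>z\<in>#M. z \<noteq> 0 \<and> \<bar>Arg z\<bar> \<le> a"
  shows "\<exists>t. prod_mset M = rcis (cmod (prod_mset M)) t \<and> \<bar>t\<bar> \<le> real (size M) * a \<and> prod_mset M \<noteq> 0"
  using assms
proof (induction M)
  case empty thus ?case by (intro exI[of _ 0]) (simp add: rcis_def)
next
  case (add z M)
  then obtain t where t: "prod_mset M = rcis (cmod (prod_mset M)) t" "\<bar>t\<bar> \<le> real (size M) * a" "prod_mset M \<noteq> 0"
    by auto
  have z: "z \<noteq> 0" "\<bar>Arg z\<bar> \<le> a" using add by auto
  have "prod_mset (add_mset z M) = rcis (cmod z) (Arg z) * rcis (cmod (prod_mset M)) t"
    using t(1) by (simp add: rcis_cmod_Arg)
  also have "\<dots> = rcis (cmod z * cmod (prod_mset M)) (Arg z + t)" by (simp add: rcis_mult)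
  finally have e: "prod_mset (add_mset z M) = rcis (cmod (prod_mset (add_mset z M))) (Arg z + t)"
    by (simp add: norm_mult)
  show ?case
    by (intro exI[of _ "Arg z + t"]) (use e z t in \<open>auto simp: algebra_simps\<close>)
qed

lemma cis_eq_int':
  assumes "cis a = cis b" shows "\<exists>m::int. a = b + 2*pi*m"
proof -
  have "sin a = sin b \<and> cos a = cos b" using assms by (metis cis.sel)
  thus ?thesis using sin_cos_eq_iff by blast
qed

lemma phase:
  fixes Y :: "nat \<Rightarrow> complex"
  assumes c0: "c0 \<in> C" and nz: "\<forall>l\<in>C. Y l \<noteq> 0"
    and rel: "\<forall>l\<in>C. \<forall>l'\<in>C. \<exists>\<rho> \<sigma>. Y l = Y l' * rcis \<rho> \<sigma> \<and> 0 < \<rho> \<and> \<bar>\<sigma>\<bar> \<le> D"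
    and D: "D < pi / 2"
  shows "\<exists>\<psi>. \<forall>l\<in>C. Y l = rcis (cmod (Y l)) (\<psi> l) \<and> (\<forall>l'\<in>C. \<bar>\<psi> l - \<psi> l'\<bar> \<le> D)"
proof -
  have "\<forall>l\<in>C. \<exists>\<rho> \<sigma>. Y l = Y c0 * rcis \<rho> \<sigma> \<and> 0 < \<rho> \<and> \<bar>\<sigma>\<bar> \<le> D" using rel c0 by blast
  then obtain \<rho>0 \<sigma>0 where rs: "\<forall>l\<in>C. Y l = Y c0 * rcis (\<rho>0 l) (\<sigma>0 l) \<and> 0 < \<rho>0 l \<and> \<bar>\<sigma>0 l\<bar> \<le> D"
    by metis
  define \<psi> where "\<psi> l = Arg (Y c0) + \<sigma>0 l" for l
  have rep: "Y l = rcis (cmod (Y l)) (\<psi> l)" if "l \<in> C" for l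
  proof -
    have "Y l = rcis (cmod (Y c0)) (Arg (Y c0)) * rcis (\<rho>0 l) (\<sigma>0 l)"
      using rs that by (simp add: rcis_cmod_Arg)
    also have "\<dots> = rcis (cmod (Y c0) * \<rho>0 l) (\<psi> l)" by (simp add: rcis_mult \<psi>_def)
    finally have e: "Y l = rcis (cmod (Y c0) * \<rho>0 l) (\<psi> l)" .
    moreover have "\<bar>\<rho>0 l\<bar> = \<rho>0 l" using rs that by auto
    ultimately have "cmod (Y l) = cmod (Y c0) * \<rho>0 l" by (simp add: abs_mult)
    thus ?thesis using e by simp
  qed
  have pair: "\<bar>\<psi> l - \<psi> l'\<bar> \<le> D" if lC: "l \<in> C" "l' \<in> C" for l l'
  proof -
    obtain \<rho> \<sigma> where r: "Y l = Y l' * rcis \<rho> \<sigma>" "0 < \<rho>" "\<bar>\<sigma>\<bar> \<le> D" using rel lC by blast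
    have "rcis (cmod (Y l)) (\<psi> l) = rcis (cmod (Y l') * \<rho>) (\<psi> l' + \<sigma>)"
      using rep[OF lC(1)] rep[OF lC(2)] r(1) by (metis rcis_mult)
    moreover have m: "cmod (Y l) = cmod (Y l') * \<rho>" using r by (simp add: norm_mult)
    ultimately have "of_real (cmod (Y l)) * cis (\<psi> l) = of_real (cmod (Y l)) * cis (\<psi> l' + \<sigma>)"
      by (simp add: rcis_def)
    moreover have "cmod (Y l) \<noteq> 0" using nz lC by simp
    ultimately have "cis (\<psi> l) = cis (\<psi> l' + \<sigma>)" by simp
    then obtain m :: int where m: "\<psi> l = \<psi> l' + \<sigma> + 2*pi*m" using cis_eq_int' by blast
    have s1: "\<bar>\<sigma>0 l\<bar> \<le> D" "\<bar>\<sigma>0 l'\<bar> \<le> D" using rs lC by auto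
    have d2: "\<bar>\<psi> l - \<psi> l'\<bar> \<le> 2 * D" using s1 unfolding \<psi>_def by linarith
    have "\<bar>2*pi*m\<bar> \<le> 3 * D" using m d2 r(3) by (simp add: abs_le_iff)
    hence "\<bar>2*pi*m\<bar> < 2 * pi" using D by simp
    hence "\<bar>real_of_int m\<bar> < 1" by (simp add: abs_mult)
    hence "m = 0" by linarith
    thus ?thesis using m r(3) by simp
  qed
  show ?thesis using rep pair by blast
qed



context prm begin

definition adm :: "complex \<Rightarrow> bool" where
  "adm z \<longleftrightarrow> cmod z \<le> \<epsilon> \<or> (\<bar>Arg z\<bar> \<le> \<epsilon> * \<theta> \<and> \<epsilon> < cmod z \<and> cmod z \<le> 1)"

definition cf :: "(nat \<times> complex) multiset \<Rightarrow> nat \<Rightarrow> complex" where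
  "cf Q l = prod_mset (image_mset (\<lambda>q. if l = fst q then snd q else 1) Q)"

definition cnt :: "(nat \<times> complex) multiset \<Rightarrow> nat \<Rightarrow> nat" where
  "cnt Q l = size (filter_mset (\<lambda>q. fst q = l) Q)"

definition Yok :: "nat \<Rightarrow> (nat \<Rightarrow> complex) \<Rightarrow> (nat \<Rightarrow> real) \<Rightarrow> bool" where
  "Yok d Y \<psi> \<longleftrightarrow> (\<forall>l\<in>{1..k}. Y l \<noteq> 0 \<and> Y l = rcis (cmod (Y l)) (\<psi> l)) \<and>
      (\<forall>l\<in>{1..k}. \<forall>l'\<in>{1..k}. \<bar>\<psi> l - \<psi> l'\<bar> \<le> real d * \<theta> \<and> cmod (Y l) \<le> (1 + K) ^ d * cmod (Y l'))"

lemma theta_pi3: "\<theta> < pi / 3"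
proof -
  have "1 * \<theta> \<le> (real \<Delta> - 1 + \<epsilon>) * \<theta>" using Delta eps theta_range by (intro mult_right_mono) auto
  thus ?thesis using n_eps_theta by simp
qed

lemma adm_le1: "adm z \<Longrightarrow> cmod z \<le> 1"
  using eps by (auto simp: adm_def)

lemma adm_minus1: assumes "adm z" shows "cmod (z - 1) \<le> 1 + \<epsilon>"
proof (cases "cmod z \<le> \<epsilon>")
  case True
  have "cmod (z - 1) \<le> cmod z + 1" by (metis norm_triangle_ineq4 norm_one)
  thus ?thesis using True by simp
next
  case False
  hence a: "\<bar>Arg z\<bar> \<le> \<epsilon> * \<theta>" "cmod z \<le> 1" "\<epsilon> < cmod z" using assms by (auto simp: adm_def)
  have "\<epsilon> * \<theta> \<le> \<theta>" using eps theta_range by (simp add: mult_left_le_one_le)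
  hence "\<bar>Arg z\<bar> \<le> pi / 3" using a theta_pi3 by linarith
  hence "cos (pi/3) \<le> cos \<bar>Arg z\<bar>" by (intro cos_monotone_0_pi_le) auto
  hence c: "1/2 \<le> cos (Arg z)" by (simp add: cos_60)
  have "z - 1 = rcis (cmod z) (Arg z) - rcis 1 0" by (simp add: rcis_cmod_Arg rcis_zero_arg)
  hence "(cmod (z - 1))\<^sup>2 = (cmod (rcis (cmod z) (Arg z) - rcis 1 0))\<^sup>2" by simp
  also have "\<dots> = (cmod z)\<^sup>2 + 1 - 2 * cmod z * cos (Arg z)"
    unfolding rcis_diff_sq by simp
  also have "\<dots> \<le> (cmod z)\<^sup>2 + 1 - cmod z"
    using c mult_left_mono[OF c, of "2 * cmod z"] by simp
  also have "\<dots> \<le> 1" using a by (simp add: power2_eq_square mult_le_one mult_left_le_one_le)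
  finally have "(cmod (z - 1))\<^sup>2 \<le> 1\<^sup>2" by simp
  hence "cmod (z - 1) \<le> 1" by (rule power2_le_imp_le) simp
  thus ?thesis using eps by simp
qed

lemma cf_filter: "cf Q l = prod_mset (image_mset snd (filter_mset (\<lambda>q. fst q = l) Q))"
  unfolding cf_def by (induction Q) auto

lemma cf_good: "\<forall>q\<in>#Q. fst q \<noteq> l \<Longrightarrow> cf Q l = 1"
  unfolding cf_def by (induction Q) auto

lemma cf_le1: assumes "\<forall>q\<in>#Q. adm (snd q)" shows "cmod (cf Q l) \<le> 1"
proof -
  have H: "\<forall>q\<in>#Q. cmod (snd q) \<le> 1" using assms adm_le1 by blast
  show ?thesis unfolding cf_filter by (rule prod_mset_cmod_le1) (use H in auto)
qed

lemma cf_bad: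
  assumes "\<forall>q\<in>#Q. adm (snd q)" "q0 \<in># Q" "fst q0 = l" "cmod (snd q0) \<le> \<epsilon>"
  shows "cmod (cf Q l) \<le> \<epsilon>"
proof -
  have H: "\<forall>q\<in>#Q. cmod (snd q) \<le> 1" using assms adm_le1 by blast
  show ?thesis unfolding cf_filter
    by (rule prod_mset_cmod_le_eps[of _ "snd q0"]) (use H assms in auto)
qed

lemma cf_nb:
  assumes "\<forall>q\<in>#Q. adm (snd q)" "\<forall>q\<in>#Q. fst q = l \<longrightarrow> \<epsilon> < cmod (snd q)"
  shows "\<exists>t. cf Q l = rcis (cmod (cf Q l)) t \<and> \<bar>t\<bar> \<le> real (cnt Q l) * (\<epsilon> * \<theta>) \<and> cf Q l \<noteq> 0"
proof -
  have "\<forall>z\<in>#image_mset snd (filter_mset (\<lambda>q. fst q = l) Q). z \<noteq> 0 \<and> \<bar>Arg z\<bar> \<le> \<epsilon> * \<theta>"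
  proof
    fix z assume "z \<in># image_mset snd (filter_mset (\<lambda>q. fst q = l) Q)"
    then obtain q where q: "q \<in># Q" "fst q = l" "z = snd q" by auto
    have "\<epsilon> < cmod z" using assms q by auto
    moreover have "adm z" using assms q by auto
    ultimately show "z \<noteq> 0 \<and> \<bar>Arg z\<bar> \<le> \<epsilon> * \<theta>" using eps by (auto simp: adm_def)
  qed
  from prod_mset_rcis[OF this] show ?thesis unfolding cf_filter[symmetric] cnt_def by simp
qed

lemma cnt_pair: assumes "l \<noteq> l'" shows "cnt Q l + cnt Q l' \<le> size Q"
proof -
  have "cnt Q l + cnt Q l' = size (filter_mset (\<lambda>q. fst q = l \<or> fst q = l') Q)"
    unfolding cnt_def using assms by (induction Q) auto
  thus ?thesis using size_filter_mset_lesseq by metis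
qed

lemma nongood_card:
  "card {l. \<exists>q\<in>#Q. fst q = l} \<le> size Q"
proof -
  have "{l. \<exists>q\<in>#Q. fst q = l} = fst ` set_mset Q" by auto
  hence "card {l. \<exists>q\<in>#Q. fst q = l} \<le> card (set_mset Q)" by (simp add: card_image_le)
  thus ?thesis using card_set_mset_le order_trans by blast
qed

lemma Yok_mu:
  assumes "Yok d Y \<psi>"
  defines "\<mu> \<equiv> Min (cmod ` Y ` {1..k})"
  shows "0 < \<mu>" "\<And>l. l \<in> {1..k} \<Longrightarrow> \<mu> \<le> cmod (Y l)"
    "\<And>l. l \<in> {1..k} \<Longrightarrow> cmod (Y l) \<le> (1 + K) ^ d * \<mu>"
proof -
  have ne: "{1..k} \<noteq> {}" using k_gt by auto
  have "\<mu> \<in> cmod ` Y ` {1..k}" unfolding \<mu>_def using ne by (intro Min_in) auto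
  then obtain l0 where l0: "l0 \<in> {1..k}" "\<mu> = cmod (Y l0)" by auto
  show "0 < \<mu>" using assms(1) l0 by (auto simp: Yok_def)
  show "\<mu> \<le> cmod (Y l)" if "l \<in> {1..k}" for l unfolding \<mu>_def using that by (intro Min_le) auto
  show "cmod (Y l) \<le> (1 + K) ^ d * \<mu>" if "l \<in> {1..k}" for l
    using assms(1) l0 that by (auto simp: Yok_def)
qed

end


context prm begin

lemma cos_phi_nonneg: assumes "d \<le> \<Delta>" shows "0 \<le> cos (phi d / 2)"
proof -
  have "phi d \<le> real \<Delta> * \<theta>" "0 \<le> phi d" using phi_bounds assms by auto
  hence "phi d / 2 \<le> pi / 2" using Delta_theta by simp
  thus ?thesis using \<open>0 \<le> phi d\<close> by (intro cos_ge_zero) auto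
qed

lemma phi_le_pi: assumes "d \<le> \<Delta>" shows "phi d \<le> pi"
  using phi_bounds[OF assms] Delta_theta pi_gt_zero by linarith

lemma den_phi: "den d = cos (phi d / 2) * (real k - (real \<Delta> - real d)) - \<epsilon> * (real \<Delta> - real d) * (1 + K) ^ d"
  unfolding den_def phi_def by simp

lemma LB:
  assumes Y: "Yok d Y \<psi>" and Q: "\<forall>q\<in>#Q. fst q \<in> {1..k} \<and> adm (snd q)"
    and dQ: "d + size Q \<le> \<Delta>"
  shows "Min (cmod ` Y ` {1..k}) * den d \<le> cmod (\<Sum>l\<in>{1..k}. cf Q l * Y l)"
proof -
  define C where "C = {1..k}"
  define \<mu> where "\<mu> = Min (cmod ` Y ` {1..k})"
  define R where "R = (1 + K) ^ d * \<mu>"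
  define f where "f = size Q"
  define Bad where "Bad = {l\<in>C. \<exists>q\<in>#Q. fst q = l \<and> cmod (snd q) \<le> \<epsilon>}"
  define NB where "NB = C - Bad"
  define Good where "Good = {l\<in>C. \<forall>q\<in>#Q. fst q \<noteq> l}"
  define g where "g l = cf Q l * Y l" for l
  have mu: "0 < \<mu>" "\<And>l. l \<in> C \<Longrightarrow> \<mu> \<le> cmod (Y l)" "\<And>l. l \<in> C \<Longrightarrow> cmod (Y l) \<le> R"
    using Yok_mu[OF Y] by (auto simp: \<mu>_def R_def C_def)
  have Qa: "\<forall>q\<in>#Q. adm (snd q)" using Q by auto
  have Rpos: "0 \<le> R" using mu K by (simp add: R_def)
  have finC: "finite C" by (simp add: C_def)
  have dle: "d \<le> \<Delta>" using dQ by simp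
  have cardBad: "card Bad \<le> f"
  proof -
    have "Bad \<subseteq> {l. \<exists>q\<in>#Q. fst q = l}" by (auto simp: Bad_def)
    hence "card Bad \<le> card {l. \<exists>q\<in>#Q. fst q = l}"
      by (intro card_mono) (auto intro: finite_subset[of _ "fst ` set_mset Q"])
    thus ?thesis using nongood_card[of Q] by (simp add: f_def)
  qed
  have gbad: "cmod (g l) \<le> \<epsilon> * R" if lB: "l \<in> Bad" for l
  proof -
    obtain q where q: "q \<in># Q" "fst q = l" "cmod (snd q) \<le> \<epsilon>" using lB by (auto simp: Bad_def)
    have "cmod (cf Q l) \<le> \<epsilon>" by (rule cf_bad[OF Qa q])
    moreover have "cmod (Y l) \<le> R" using lB mu by (auto simp: Bad_def)
    ultimately show ?thesis unfolding g_def norm_mult using eps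
      by (intro mult_mono) auto
  qed
  have sBad: "(\<Sum>l\<in>Bad. cmod (g l)) \<le> real f * (\<epsilon> * R)"
  proof -
    have "(\<Sum>l\<in>Bad. cmod (g l)) \<le> real (card Bad) * (\<epsilon> * R)"
      using sum_bounded_above[of Bad "\<lambda>l. cmod (g l)" "\<epsilon> * R"] gbad by simp
    also have "\<dots> \<le> real f * (\<epsilon> * R)"
      using cardBad eps Rpos by (intro mult_right_mono) auto
    finally show ?thesis .
  qed
  have "\<forall>l\<in>NB. \<exists>t. cf Q l = rcis (cmod (cf Q l)) t \<and> \<bar>t\<bar> \<le> real (cnt Q l) * (\<epsilon> * \<theta>) \<and> cf Q l \<noteq> 0"
  proof
    fix l assume "l \<in> NB"
    hence "\<forall>q\<in>#Q. fst q = l \<longrightarrow> \<epsilon> < cmod (snd q)" by (auto simp: NB_def Bad_def)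
    thus "\<exists>t. cf Q l = rcis (cmod (cf Q l)) t \<and> \<bar>t\<bar> \<le> real (cnt Q l) * (\<epsilon> * \<theta>) \<and> cf Q l \<noteq> 0"
      by (rule cf_nb[OF Qa])
  qed
  then obtain \<tau> where tau: "\<And>l. l \<in> NB \<Longrightarrow> cf Q l = rcis (cmod (cf Q l)) (\<tau> l) \<and> \<bar>\<tau> l\<bar> \<le> real (cnt Q l) * (\<epsilon> * \<theta>)"
    by metis
  have grep: "g l = rcis (cmod (cf Q l) * cmod (Y l)) (\<tau> l + \<psi> l)" if "l \<in> NB" for l
  proof -
    have "Y l = rcis (cmod (Y l)) (\<psi> l)" using Y that by (auto simp: Yok_def NB_def C_def)
    hence "g l = rcis (cmod (cf Q l)) (\<tau> l) * rcis (cmod (Y l)) (\<psi> l)"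
      using tau[OF that] unfolding g_def by metis
    thus ?thesis by (simp add: rcis_mult)
  qed
  have angle: "\<bar>(\<tau> l + \<psi> l) - (\<tau> l' + \<psi> l')\<bar> \<le> phi d" if "l \<in> NB" "l' \<in> NB" for l l'
  proof (cases "l = l'")
    case True thus ?thesis using phi_bounds[OF dle] by simp
  next
    case False
    have t: "\<bar>\<tau> l\<bar> \<le> real (cnt Q l) * (\<epsilon> * \<theta>)" "\<bar>\<tau> l'\<bar> \<le> real (cnt Q l') * (\<epsilon> * \<theta>)"
      using tau that by auto
    have ps: "\<bar>\<psi> l - \<psi> l'\<bar> \<le> real d * \<theta>" using Y that by (auto simp: Yok_def NB_def C_def)
    have cc: "real (cnt Q l) + real (cnt Q l') \<le> real \<Delta> - real d"
      using cnt_pair[OF False, of Q] dQ by simp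
    have "\<bar>(\<tau> l + \<psi> l) - (\<tau> l' + \<psi> l')\<bar> \<le> \<bar>\<tau> l\<bar> + \<bar>\<tau> l'\<bar> + \<bar>\<psi> l - \<psi> l'\<bar>" by simp
    also have "\<dots> \<le> (real (cnt Q l) + real (cnt Q l')) * (\<epsilon> * \<theta>) + real d * \<theta>"
      using t ps by (simp add: algebra_simps)
    also have "\<dots> \<le> (real \<Delta> - real d) * (\<epsilon> * \<theta>) + real d * \<theta>"
      using cc eps theta_range by (intro add_right_mono mult_right_mono) auto
    also have "\<dots> = phi d" by (simp add: phi_def algebra_simps)
    finally show ?thesis .
  qed
  have cone: "cos (phi d / 2) * (\<Sum>l\<in>NB. cmod (cf Q l) * cmod (Y l)) \<le> cmod (\<Sum>l\<in>NB. g l)"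
  proof -
    have "cos (phi d / 2) * (\<Sum>l\<in>NB. cmod (cf Q l) * cmod (Y l))
        \<le> cmod (\<Sum>l\<in>NB. rcis (cmod (cf Q l) * cmod (Y l)) (\<tau> l + \<psi> l))"
      by (rule cone_sum) (use finC angle phi_le_pi[OF dle] in \<open>auto simp: NB_def\<close>)
    also have "(\<Sum>l\<in>NB. rcis (cmod (cf Q l) * cmod (Y l)) (\<tau> l + \<psi> l)) = (\<Sum>l\<in>NB. g l)"
      by (rule sum.cong) (auto simp: grep)
    finally show ?thesis .
  qed
  have GoodNB: "Good \<subseteq> NB" by (auto simp: Good_def NB_def Bad_def)
  have cardGood: "real k - real f \<le> real (card Good)"
  proof -
    have "C - Good \<subseteq> {l. \<exists>q\<in>#Q. fst q = l}" by (auto simp: Good_def)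
    hence "card (C - Good) \<le> card {l. \<exists>q\<in>#Q. fst q = l}"
      by (intro card_mono) (auto intro: finite_subset[of _ "fst ` set_mset Q"])
    hence cg: "card (C - Good) \<le> f" using nongood_card[of Q] by (simp add: f_def)
    have GC: "Good \<subseteq> C" by (auto simp: Good_def)
    have "card (C - Good) = card C - card Good"
      by (rule card_Diff_subset[OF finite_subset[OF GC finC] GC])
    moreover have "card Good \<le> card C" by (rule card_mono[OF finC GC])
    moreover have "card C = k" by (simp add: C_def)
    ultimately show ?thesis using cg by linarith
  qed
  have sNB: "real (card Good) * \<mu> \<le> (\<Sum>l\<in>NB. cmod (cf Q l) * cmod (Y l))"
  proof -
    have "real (card Good) * \<mu> = (\<Sum>l\<in>Good. \<mu>)" by simp
    also have "\<dots> \<le> (\<Sum>l\<in>Good. cmod (cf Q l) * cmod (Y l))"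
    proof (rule sum_mono)
      fix l assume "l \<in> Good"
      hence "cf Q l = 1" "l \<in> C" using cf_good by (auto simp: Good_def)
      thus "\<mu> \<le> cmod (cf Q l) * cmod (Y l)" using mu by simp
    qed
    also have "\<dots> \<le> (\<Sum>l\<in>NB. cmod (cf Q l) * cmod (Y l))"
      by (rule sum_mono2) (use finC GoodNB in \<open>auto simp: NB_def\<close>)
    finally show ?thesis .
  qed
  have split: "(\<Sum>l\<in>C. g l) = (\<Sum>l\<in>NB. g l) + (\<Sum>l\<in>Bad. g l)"
  proof -
    have CU: "C = NB \<union> Bad" "NB \<inter> Bad = {}" by (auto simp: NB_def Bad_def)
    have fNB: "finite NB" "finite Bad" using finC by (auto simp: NB_def Bad_def)
    show ?thesis unfolding CU(1) by (rule sum.union_disjoint[OF fNB CU(2)])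
  qed
  have "cmod (\<Sum>l\<in>C. g l) \<ge> cmod (\<Sum>l\<in>NB. g l) - (\<Sum>l\<in>Bad. cmod (g l))"
  proof -
    have e: "(\<Sum>l\<in>NB. g l) = (\<Sum>l\<in>C. g l) - (\<Sum>l\<in>Bad. g l)" using split by simp
    have "cmod (\<Sum>l\<in>NB. g l) \<le> cmod (\<Sum>l\<in>C. g l) + cmod (\<Sum>l\<in>Bad. g l)"
      unfolding e by (rule norm_triangle_ineq4)
    moreover have "cmod (\<Sum>l\<in>Bad. g l) \<le> (\<Sum>l\<in>Bad. cmod (g l))" by (rule norm_sum)
    ultimately show ?thesis by linarith
  qed
  moreover have "cos (phi d / 2) * (real (card Good) * \<mu>) \<le> cmod (\<Sum>l\<in>NB. g l)"
    using order_trans[OF mult_left_mono[OF sNB cos_phi_nonneg[OF dle]] cone] .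
  moreover have "cos (phi d / 2) * ((real k - (real \<Delta> - real d)) * \<mu>) \<le> cos (phi d / 2) * (real (card Good) * \<mu>)"
  proof -
    have "real k - (real \<Delta> - real d) \<le> real (card Good)" using cardGood dQ by (simp add: f_def)
    thus ?thesis using mu cos_phi_nonneg[OF dle] by (intro mult_left_mono mult_right_mono) auto
  qed
  moreover have "real f * (\<epsilon> * R) \<le> (real \<Delta> - real d) * (\<epsilon> * R)"
    using dQ eps Rpos by (intro mult_right_mono) (auto simp: f_def)
  ultimately have "cmod (\<Sum>l\<in>C. g l) \<ge> cos (phi d / 2) * ((real k - (real \<Delta> - real d)) * \<mu>) - (real \<Delta> - real d) * (\<epsilon> * R)"
    using sBad by linarith
  moreover have "cos (phi d / 2) * ((real k - (real \<Delta> - real d)) * \<mu>) - (real \<Delta> - real d) * (\<epsilon> * R) = \<mu> * den d"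
    unfolding den_phi R_def by (simp add: algebra_simps)
  ultimately show ?thesis by (simp add: \<mu>_def C_def g_def)
qed


lemma fb_eq: "fbound d K p = max (2 * sin (p/2)) (sqrt (1 + (1 / (1+K)^d)\<^sup>2 - 2 * (1 / (1+K)^d) * cos p))"
proof -
  have "(1 / (1+K)^d)\<^sup>2 = 1 / (1+K)^(2*d)" by (simp add: power_mult power_divide mult.commute)
  moreover have "2 * (1 / (1+K)^d) * cos p = 2 * cos p / (1+K)^d" by simp
  ultimately show ?thesis unfolding fbound_def by simp
qed

lemma UB:
  assumes Y: "Yok d Y \<psi>" and Q: "\<forall>q\<in>#Q. fst q \<in> {1..k} \<and> adm (snd q)"
    and dQ: "d + size Q + 1 \<le> \<Delta>" and ab: "a \<in> {1..k}" "b \<in> {1..k}" and x: "adm x"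
  shows "cmod ((x - 1) * (cf Q a * Y a - cf Q b * Y b)) \<le> K * (Min (cmod ` Y ` {1..k}) * den d)"
proof -
  define C where "C = {1..k}"
  define \<mu> where "\<mu> = Min (cmod ` Y ` {1..k})"
  define R where "R = (1 + K) ^ d * \<mu>"
  have mu: "0 < \<mu>" "\<And>l. l \<in> C \<Longrightarrow> \<mu> \<le> cmod (Y l)" "\<And>l. l \<in> C \<Longrightarrow> cmod (Y l) \<le> R"
    using Yok_mu[OF Y] by (auto simp: \<mu>_def R_def C_def)
  have Qa: "\<forall>q\<in>#Q. adm (snd q)" using Q by auto
  have Rpos: "0 \<le> R" using mu K by (simp add: R_def)
  have dle: "d \<le> \<Delta> - 1" "d \<le> \<Delta>" using dQ by auto
  have denp: "0 < den d" by (rule den_pos[OF dle(2)])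
  have x1: "cmod (x - 1) \<le> 1 + \<epsilon>" by (rule adm_minus1[OF x])
  have cfle: "cmod (cf Q l) \<le> 1" for l by (rule cf_le1[OF Qa])
  have gle: "cmod (cf Q l * Y l) \<le> R" if "l \<in> C" for l
  proof -
    have "cmod (cf Q l) * cmod (Y l) \<le> 1 * R" using cfle mu that by (intro mult_mono) auto
    thus ?thesis by (simp add: norm_mult)
  qed
  show ?thesis
  proof (cases "d + 2 \<le> \<Delta>")
    case True
    have D: "cmod (cf Q a * Y a - cf Q b * Y b) \<le> (1 + \<epsilon>) * R"
    proof (cases "\<exists>l\<in>{a,b}. \<exists>q\<in>#Q. fst q = l \<and> cmod (snd q) \<le> \<epsilon>")
      case True
      then obtain l l' where ll: "{l,l'} = {a,b}" "\<exists>q\<in>#Q. fst q = l \<and> cmod (snd q) \<le> \<epsilon>" by auto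
      obtain q where q: "q \<in># Q" "fst q = l" "cmod (snd q) \<le> \<epsilon>" using ll by auto
      have lC: "l \<in> C" "l' \<in> C" using ll ab by (auto simp: C_def doubleton_eq_iff)
      have "cmod (cf Q l * Y l) \<le> \<epsilon> * R"
      proof -
        have "cmod (cf Q l) * cmod (Y l) \<le> \<epsilon> * R"
          using cf_bad[OF Qa q] mu lC eps by (intro mult_mono) auto
        thus ?thesis by (simp add: norm_mult)
      qed
      moreover have "cmod (cf Q l' * Y l') \<le> R" by (rule gle[OF lC(2)])
      moreover have "cmod (cf Q a * Y a - cf Q b * Y b) \<le> cmod (cf Q l * Y l) + cmod (cf Q l' * Y l')"
        using ll by (auto simp: doubleton_eq_iff norm_minus_commute intro: norm_triangle_ineq4)
      ultimately show ?thesis by (simp add: algebra_simps)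
    next
      case False
      have nb: "\<forall>q\<in>#Q. fst q = l \<longrightarrow> \<epsilon> < cmod (snd q)" if "l \<in> {a,b}" for l
        using False that by force
      obtain ta where ta: "cf Q a = rcis (cmod (cf Q a)) ta" "\<bar>ta\<bar> \<le> real (cnt Q a) * (\<epsilon> * \<theta>)"
        using cf_nb[OF Qa nb[of a]] by auto
      obtain tb where tb: "cf Q b = rcis (cmod (cf Q b)) tb" "\<bar>tb\<bar> \<le> real (cnt Q b) * (\<epsilon> * \<theta>)"
        using cf_nb[OF Qa nb[of b]] by auto
      have Ya: "Y a = rcis (cmod (Y a)) (\<psi> a)" and Yb: "Y b = rcis (cmod (Y b)) (\<psi> b)"
        using Y ab by (auto simp: Yok_def)
      have ga: "cf Q a * Y a = rcis (cmod (cf Q a) * cmod (Y a)) (ta + \<psi> a)"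
        using ta(1) Ya by (metis rcis_mult)
      have gb: "cf Q b * Y b = rcis (cmod (cf Q b) * cmod (Y b)) (tb + \<psi> b)"
        using tb(1) Yb by (metis rcis_mult)
      have ang: "\<bar>(ta + \<psi> a) - (tb + \<psi> b)\<bar> \<le> pi / 3"
      proof (cases "a = b")
        case True
        have "ta = tb"
        proof -
          have "rcis (cmod (cf Q a)) ta = rcis (cmod (cf Q a)) tb" using ta tb True by simp
          moreover have "cf Q a \<noteq> 0" using cf_nb[OF Qa nb[of a]] by auto
          ultimately have "cis ta = cis tb" by (simp add: rcis_def)
          then obtain m :: int where m: "ta = tb + 2*pi*m" using cis_eq_int' by blast
          have "\<bar>ta\<bar> \<le> real (size Q) * (\<epsilon> * \<theta>)"
          proof -
            have "cnt Q a \<le> size Q" unfolding cnt_def by (rule size_filter_mset_lesseq)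
            thus ?thesis using ta(2) eps theta_range by (meson order_trans mult_right_mono of_nat_le_iff mult_nonneg_nonneg less_imp_le)
          qed
          moreover have "\<bar>tb\<bar> \<le> real (size Q) * (\<epsilon> * \<theta>)"
          proof -
            have "cnt Q b \<le> size Q" unfolding cnt_def by (rule size_filter_mset_lesseq)
            thus ?thesis using tb(2) eps theta_range by (meson order_trans mult_right_mono of_nat_le_iff mult_nonneg_nonneg less_imp_le)
          qed
          moreover have "real (size Q) * (\<epsilon> * \<theta>) \<le> phi d"
          proof -
            have "real (size Q) \<le> real \<Delta> - real d" using dQ by simp
            hence "real (size Q) * (\<epsilon> * \<theta>) \<le> (real \<Delta> - real d) * (\<epsilon> * \<theta>)"
              using eps theta_range by (intro mult_right_mono) auto
            also have "\<dots> \<le> phi d" unfolding phi_def using theta_range by (simp add: algebra_simps)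
            finally show ?thesis .
          qed
          moreover have "phi d < pi / 3" using phi_le_n[OF dle(1)] n_eps_theta by linarith
          ultimately have "\<bar>2*pi*m\<bar> < 2 * pi" using m by (simp add: abs_le_iff) linarith
          hence "\<bar>real_of_int m\<bar> < 1" by (simp add: abs_mult)
          hence "m = 0" by linarith
          thus ?thesis using m by simp
        qed
        thus ?thesis using True by simp
      next
        case False
        have ps: "\<bar>\<psi> a - \<psi> b\<bar> \<le> real d * \<theta>" using Y ab by (auto simp: Yok_def)
        have cc: "real (cnt Q a) + real (cnt Q b) \<le> real \<Delta> - real d"
          using cnt_pair[OF False, of Q] dQ by simp
        have "\<bar>(ta + \<psi> a) - (tb + \<psi> b)\<bar> \<le> \<bar>ta\<bar> + \<bar>tb\<bar> + \<bar>\<psi> a - \<psi> b\<bar>" by simp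
        also have "\<dots> \<le> (real (cnt Q a) + real (cnt Q b)) * (\<epsilon> * \<theta>) + real d * \<theta>"
          using ta(2) tb(2) ps by (simp add: algebra_simps)
        also have "\<dots> \<le> (real \<Delta> - real d) * (\<epsilon> * \<theta>) + real d * \<theta>"
          using cc eps theta_range by (intro add_right_mono mult_right_mono) auto
        also have "\<dots> = phi d" by (simp add: phi_def algebra_simps)
        also have "\<dots> \<le> pi / 3" using phi_le_n[OF dle(1)] n_eps_theta by linarith
        finally show ?thesis .
      qed
      have r: "cmod (cf Q a) * cmod (Y a) \<le> R" "cmod (cf Q b) * cmod (Y b) \<le> R"
        using gle ab by (auto simp: C_def norm_mult)
      have "cmod (cf Q a * Y a - cf Q b * Y b) \<le> R"
        unfolding ga gb by (rule pi3_diff[OF _ _ r ang]) auto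
      moreover have "0 \<le> \<epsilon> * R" using eps Rpos by simp
      ultimately show ?thesis by (simp add: distrib_right)
    qed
    have "cmod ((x - 1) * (cf Q a * Y a - cf Q b * Y b)) \<le> (1 + \<epsilon>) * ((1 + \<epsilon>) * R)"
      unfolding norm_mult using x1 D eps by (intro mult_mono) auto
    also have "\<dots> = ((1 + \<epsilon>)\<^sup>2 * (1 + K) ^ d) * \<mu>" by (simp add: R_def power2_eq_square algebra_simps)
    also have "\<dots> \<le> (K * den d) * \<mu>"
    proof -
      have c1: "den d \<noteq> 0 \<and> (1 + \<epsilon>)\<^sup>2 * (1 + K) ^ d / den d \<le> K"
        using cond1[of d] True unfolding Let_def den_def by simp
      hence "(1 + \<epsilon>)\<^sup>2 * (1 + K) ^ d \<le> K * den d" using denp by (simp add: divide_le_eq)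
      thus ?thesis using mu by (intro mult_right_mono) auto
    qed
    finally show ?thesis by (simp add: \<mu>_def algebra_simps)
  next
    case False
    have dD: "d = \<Delta> - 1" "size Q = 0" using dQ False by linarith+
    hence Qe: "Q = {#}" by simp
    have cf1: "cf Q l = 1" for l by (simp add: Qe cf_def)
    define fb where "fb = fbound d K (phi d)"
    define r0 where "r0 = 1 / (1 + K) ^ d"
    have r0: "0 < r0" "r0 \<le> 1" using K by (auto simp: r0_def one_le_power)
    have fbe: "fb = max (2 * sin (phi d / 2)) (sqrt (1 + r0\<^sup>2 - 2 * r0 * cos (phi d)))"
      unfolding fb_def r0_def by (rule fb_eq)
    have s0: "0 \<le> sin (phi d / 2)"
      by (rule sin_ge_zero) (use phi_bounds(1)[OF dle(2)] phi_le_pi[OF dle(2)] in auto)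
    have fb0: "0 \<le> fb" using s0 unfolding fbe by (simp add: le_max_iff_disj)
    have Ya: "Y a = rcis (cmod (Y a)) (\<psi> a)" and Yb: "Y b = rcis (cmod (Y b)) (\<psi> b)"
      and nza: "Y a \<noteq> 0" and nzb: "Y b \<noteq> 0"
      using Y ab by (auto simp: Yok_def)
    have ps: "\<bar>\<psi> a - \<psi> b\<bar> \<le> phi d"
    proof -
      have "\<bar>\<psi> a - \<psi> b\<bar> \<le> real d * \<theta>" using Y ab by (auto simp: Yok_def)
      also have "\<dots> \<le> phi d" unfolding phi_def using dD Delta eps theta_range
        by (intro mult_right_mono) auto
      finally show ?thesis .
    qed
    have rat: "r0 * cmod (Y l') \<le> cmod (Y l)" if "l \<in> C" "l' \<in> C" for l l'
    proof -
      have "cmod (Y l') \<le> (1 + K) ^ d * cmod (Y l)" using Y that by (auto simp: Yok_def C_def)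
      thus ?thesis using K by (simp add: r0_def divide_simps mult.commute)
    qed
    have D: "cmod (Y a - Y b) \<le> fb * R"
    proof (cases "cmod (Y a) \<le> cmod (Y b)")
      case True
      have "cmod (Y a - Y b) \<le> cmod (Y b) * fb"
        unfolding fbe using fb_diff[OF r0 _ rat[of a b] True ps phi_le_pi[OF dle(2)]] nzb ab Ya Yb
        by (simp add: C_def)
      moreover have "cmod (Y b) \<le> R" using mu ab by (simp add: C_def)
      moreover have "0 \<le> fb" by (rule fb0)
      ultimately show ?thesis by (metis mult.commute mult_left_mono order_trans)
    next
      case False
      have "cmod (Y b - Y a) \<le> cmod (Y a) * fb"
      proof -
        have ps': "\<bar>\<psi> b - \<psi> a\<bar> \<le> phi d" using ps by (simp add: abs_minus_commute)
        have "cmod (rcis (cmod (Y b)) (\<psi> b) - rcis (cmod (Y a)) (\<psi> a)) \<le> cmod (Y a) * fb"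
          unfolding fbe using fb_diff[OF r0 _ rat[of b a] _ ps' phi_le_pi[OF dle(2)]] nza ab False
          by (simp add: C_def)
        thus ?thesis using Ya Yb by simp
      qed
      moreover have "cmod (Y a) \<le> R" using mu ab by (simp add: C_def)
      moreover have "0 \<le> fb" by (rule fb0)
      ultimately show ?thesis by (metis mult.commute mult_left_mono order_trans norm_minus_commute)
    qed
    have fbp: "0 < fb"
    proof -
      have "0 \<le> fb" by (rule fb0)
      moreover have "fb \<noteq> 0" using cond2[of d] dD unfolding Let_def fb_def phi_def by simp
      ultimately show ?thesis by simp
    qed
    have "cmod ((x - 1) * (cf Q a * Y a - cf Q b * Y b)) \<le> (1 + \<epsilon>) * (fb * R)"
      unfolding norm_mult cf1 using x1 D eps by (intro mult_mono) auto
    also have "\<dots> = ((1 + \<epsilon>) * (1 + K) ^ d * fb) * \<mu>" by (simp add: R_def algebra_simps)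
    also have "\<dots> \<le> (K * den d) * \<mu>"
    proof -
      have c2: "(1 + \<epsilon>) * (1 + K) ^ d / den d \<le> K / fb"
        using cond2[of d] dD unfolding Let_def den_def fb_def phi_def by simp
      hence "(1 + \<epsilon>) * (1 + K) ^ d * fb \<le> K * den d" using denp fbp by (simp add: divide_simps)
      thus ?thesis using mu by (intro mult_right_mono) auto
    qed
    finally show ?thesis by (simp add: \<mu>_def algebra_simps)
  qed
qed

end


definition pf :: "('a \<Rightarrow> nat) \<Rightarrow> 'a \<times> nat \<times> complex \<Rightarrow> complex" where
  "pf \<phi> p = (if \<phi> (fst p) = fst (snd p) then snd (snd p) else 1)"

definition pprod :: "('a \<times> nat \<times> complex) multiset \<Rightarrow> ('a \<Rightarrow> nat) \<Rightarrow> complex" where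
  "pprod P \<phi> = prod_mset (image_mset (pf \<phi>) P)"

definition eprod :: "'a set \<Rightarrow> ('a \<Rightarrow> 'a \<Rightarrow> bool) \<Rightarrow> ('a set \<Rightarrow> complex) \<Rightarrow> ('a \<Rightarrow> nat) \<Rightarrow> complex" where
  "eprod V E w \<phi> = (\<Prod>e\<in>edges V E. if (\<forall>x\<in>e. \<forall>y\<in>e. \<phi> x = \<phi> y) then w e else 1)"

definition ZZ :: "'a set \<Rightarrow> ('a \<Rightarrow> 'a \<Rightarrow> bool) \<Rightarrow> ('a set \<Rightarrow> complex) \<Rightarrow> nat
   \<Rightarrow> ('a \<times> nat \<times> complex) multiset \<Rightarrow> 'a set \<Rightarrow> ('a \<Rightarrow> nat) \<Rightarrow> complex" where
  "ZZ V E w k P U cu = (\<Sum>\<phi>\<in>{\<phi> \<in> V \<rightarrow>\<^sub>E {1..k}. \<forall>x\<in>U. \<phi> x = cu x}. eprod V E w \<phi> * pprod P \<phi>)"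

definition newp :: "'a set \<Rightarrow> ('a \<Rightarrow> 'a \<Rightarrow> bool) \<Rightarrow> ('a set \<Rightarrow> complex) \<Rightarrow> 'a set
   \<Rightarrow> ('a \<Rightarrow> nat) \<Rightarrow> ('a \<times> nat \<times> complex) multiset" where
  "newp V E w F cu = image_mset (\<lambda>(x,v). (v, cu x, w {x,v})) (mset_set {(x,v). x \<in> F \<and> v \<in> V \<and> E x v})"

lemma pprod_union: "pprod (A + B) \<phi> = pprod A \<phi> * pprod B \<phi>"
  by (simp add: pprod_def)

lemma pprod_cong: "(\<And>p. p \<in># P \<Longrightarrow> \<phi> (fst p) = \<psi> (fst p)) \<Longrightarrow> pprod P \<phi> = pprod P \<psi>"
  unfolding pprod_def pf_def by (intro arg_cong[where f=prod_mset] image_mset_cong) auto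

lemma Zr_ZZ:
  assumes "distinct W" "length L = length W"
  shows "Zr V E w k W L = ZZ V E w k {#} (set W) (fcol W L)"
proof -
  have "(\<forall>i<length W. \<phi> (W ! i) = L ! i) \<longleftrightarrow> (\<forall>x\<in>set W. \<phi> x = fcol W L x)" for \<phi> :: "'a \<Rightarrow> nat"
  proof -
    have f: "fcol W L (W ! i) = L ! i" if "i < length W" for i
      using map_of_zip_nth[of W L i] assms that by (simp add: fcol_def)
    show ?thesis by (metis f in_set_conv_nth)
  qed
  thus ?thesis unfolding Zr_def ZZ_def eprod_def pprod_def by simp
qed

lemma ZZ_split:
  assumes "finite V" "u \<in> V" "u \<notin> U"
  shows "ZZ V E w k P U cu = (\<Sum>l\<in>{1..k}. ZZ V E w k P (insert u U) (cu(u:=l)))"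
proof -
  define S where "S = {\<phi> \<in> V \<rightarrow>\<^sub>E {1..k}. \<forall>x\<in>U. \<phi> x = cu x}"
  have "finite (V \<rightarrow>\<^sub>E {1..k})" using assms(1) by (simp add: finite_PiE)
  hence fS: "finite S" unfolding S_def by (rule rev_finite_subset) auto
  have img: "(\<lambda>\<phi>. \<phi> u) ` S \<subseteq> {1..k}" using assms(2) by (auto simp: S_def PiE_def Pi_def)
  have eq: "{\<phi> \<in> S. \<phi> u = l} = {\<phi> \<in> V \<rightarrow>\<^sub>E {1..k}. \<forall>x\<in>insert u U. \<phi> x = (cu(u:=l)) x}" for l
    using assms(3) by (auto simp: S_def)
  have "ZZ V E w k P U cu = (\<Sum>l\<in>{1..k}. \<Sum>\<phi>\<in>{\<phi> \<in> S. \<phi> u = l}. eprod V E w \<phi> * pprod P \<phi>)"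
    unfolding ZZ_def S_def[symmetric] using sum.group[OF fS _ img, of "\<lambda>\<phi>. eprod V E w \<phi> * pprod P \<phi>"] by simp
  also have "\<dots> = (\<Sum>l\<in>{1..k}. ZZ V E w k P (insert u U) (cu(u:=l)))"
    unfolding ZZ_def eq by simp
  finally show ?thesis .
qed


lemma edges_split:
  assumes FV: "F \<subseteq> V" and indep: "\<forall>x\<in>F. \<forall>y\<in>F. \<not> E x y" and sym: "\<forall>x y. E x y \<longrightarrow> E y x"
  shows "edges V E = edges (V - F) E \<union> (\<lambda>(x,v). {x,v}) ` {(x,v). x \<in> F \<and> v \<in> V \<and> E x v}"
proof (intro equalityI subsetI)
  fix e assume "e \<in> edges V E"
  then obtain a b where e: "e = {a,b}" "a \<in> V" "b \<in> V" "E a b" by (auto simp: edges_def)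
  show "e \<in> edges (V - F) E \<union> (\<lambda>(x,v). {x,v}) ` {(x,v). x \<in> F \<and> v \<in> V \<and> E x v}"
  proof (cases "a \<in> F")
    case True thus ?thesis using e by auto
  next
    case aF: False
    show ?thesis
    proof (cases "b \<in> F")
      case True
      have "E b a" using sym e by auto
      hence "(b,a) \<in> {(x,v). x \<in> F \<and> v \<in> V \<and> E x v}" using True e by auto
      moreover have "e = (\<lambda>(x,v). {x,v}) (b,a)" using e by auto
      ultimately show ?thesis by blast
    next
      case False thus ?thesis using aF e by (auto simp: edges_def)
    qed
  qed
next
  fix e assume "e \<in> edges (V - F) E \<union> (\<lambda>(x,v). {x,v}) ` {(x,v). x \<in> F \<and> v \<in> V \<and> E x v}"
  thus "e \<in> edges V E" using FV by (auto simp: edges_def)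
qed

lemma ZZ_reduce:
  assumes fin: "finite V" and FV: "F \<subseteq> V" and FU: "F \<subseteq> U"
    and indep: "\<forall>x\<in>F. \<forall>y\<in>F. \<not> E x y" and sym: "\<forall>x y. E x y \<longrightarrow> E y x"
    and col: "\<forall>x\<in>F. cu x \<in> {1..k}" and Pin: "\<forall>p\<in>#P. fst p \<in> V"
  shows "ZZ V E w k P U cu = pprod (filter_mset (\<lambda>p. fst p \<in> F) P) cu *
           ZZ (V - F) E w k (filter_mset (\<lambda>p. fst p \<notin> F) P + newp V E w F cu) (U - F) cu"
proof -
  define A where "A = {\<phi> \<in> V \<rightarrow>\<^sub>E {1..k}. \<forall>x\<in>U. \<phi> x = cu x}"
  define B where "B = {\<psi> \<in> (V - F) \<rightarrow>\<^sub>E {1..k}. \<forall>x\<in>U - F. \<psi> x = cu x}"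
  define h where "h \<phi> = restrict \<phi> (V - F)" for \<phi> :: "'a \<Rightarrow> nat"
  define Pairs where "Pairs = {(x,v). x \<in> F \<and> v \<in> V \<and> E x v}"
  define c0 where "c0 = pprod (filter_mset (\<lambda>p. fst p \<in> F) P) cu"
  define P' where "P' = filter_mset (\<lambda>p. fst p \<notin> F) P + newp V E w F cu"
  have finP: "finite Pairs" unfolding Pairs_def
    by (rule finite_subset[of _ "F \<times> V"]) (use fin FV in \<open>auto intro: finite_subset\<close>)
  have bij: "bij_betw h A B"
  proof (rule bij_betw_imageI)
    show "inj_on h A"
    proof (rule inj_onI)
      fix \<phi>1 \<phi>2 assume a: "\<phi>1 \<in> A" "\<phi>2 \<in> A" "h \<phi>1 = h \<phi>2"
      show "\<phi>1 = \<phi>2"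
      proof
        fix x
        show "\<phi>1 x = \<phi>2 x"
        proof (cases "x \<in> V")
          case True
          show ?thesis
          proof (cases "x \<in> F")
            case True thus ?thesis using a FU by (auto simp: A_def)
          next
            case False
            hence "h \<phi>1 x = \<phi>1 x" "h \<phi>2 x = \<phi>2 x" using \<open>x \<in> V\<close> by (auto simp: h_def)
            thus ?thesis using a by simp
          qed
        next
          case False thus ?thesis using a by (auto simp: A_def PiE_def extensional_def)
        qed
      qed
    qed
    show "h ` A = B"
    proof (intro equalityI subsetI)
      fix \<psi> assume "\<psi> \<in> h ` A"
      then obtain \<phi> where "\<phi> \<in> A" "\<psi> = h \<phi>" by auto
      thus "\<psi> \<in> B" by (auto simp: A_def B_def h_def PiE_def Pi_def extensional_def)
    next
      fix \<psi> assume \<psi>: "\<psi> \<in> B"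
      define \<phi> where "\<phi> x = (if x \<in> F then cu x else \<psi> x)" for x
      have "\<phi> \<in> A"
      proof -
        have "\<phi> \<in> V \<rightarrow>\<^sub>E {1..k}"
          using \<psi> col FV by (auto simp: \<phi>_def B_def PiE_def Pi_def extensional_def)
        moreover have "\<forall>x\<in>U. \<phi> x = cu x" using \<psi> by (auto simp: \<phi>_def B_def)
        ultimately show ?thesis by (simp add: A_def)
      qed
      moreover have "h \<phi> = \<psi>"
      proof
        fix x show "h \<phi> x = \<psi> x"
          using \<psi> by (auto simp: h_def \<phi>_def B_def PiE_def extensional_def)
      qed
      ultimately show "\<psi> \<in> h ` A" by blast
    qed
  qed
  have key: "eprod V E w \<phi> * pprod P \<phi> = c0 * (eprod (V - F) E w (h \<phi>) * pprod P' (h \<phi>))"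
    if \<phi>A: "\<phi> \<in> A" for \<phi>
  proof -
    have \<phi>F: "\<phi> x = cu x" if "x \<in> F" for x using \<phi>A that FU by (auto simp: A_def)
    have hV: "h \<phi> x = \<phi> x" if "x \<in> V" "x \<notin> F" for x using that by (simp add: h_def)
    have "pprod P \<phi> = pprod (filter_mset (\<lambda>p. fst p \<in> F) P) \<phi> * pprod (filter_mset (\<lambda>p. fst p \<notin> F) P) \<phi>"
      by (metis multiset_partition pprod_union)
    also have "pprod (filter_mset (\<lambda>p. fst p \<in> F) P) \<phi> = c0"
      unfolding c0_def by (rule pprod_cong) (auto simp: \<phi>F)
    also have "pprod (filter_mset (\<lambda>p. fst p \<notin> F) P) \<phi> = pprod (filter_mset (\<lambda>p. fst p \<notin> F) P) (h \<phi>)"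
      by (rule pprod_cong) (use Pin hV in auto)
    finally have pp: "pprod P \<phi> = c0 * pprod (filter_mset (\<lambda>p. fst p \<notin> F) P) (h \<phi>)" .
    define g where "g e = (if (\<forall>x\<in>e. \<forall>y\<in>e. \<phi> x = \<phi> y) then w e else 1)" for e
    define gh where "gh e = (if (\<forall>x\<in>e. \<forall>y\<in>e. h \<phi> x = h \<phi> y) then w e else 1)" for e
    have fe: "finite (edges (V - F) E)"
      by (rule finite_subset[of _ "Pow (V - F)"]) (use fin in \<open>auto simp: edges_def\<close>)
    have disj: "edges (V - F) E \<inter> (\<lambda>(x,v). {x,v}) ` Pairs = {}"
      by (auto simp: edges_def Pairs_def doubleton_eq_iff)
    have inj: "inj_on (\<lambda>(x,v). {x,v}) Pairs"
    proof (rule inj_onI, clarify)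
      fix x v x' v' assume "(x,v) \<in> Pairs" "(x',v') \<in> Pairs" "{x,v} = {x',v'}"
      thus "x = x' \<and> v = v'" using indep by (auto simp: Pairs_def doubleton_eq_iff)
    qed
    have "eprod V E w \<phi> = prod g (edges (V - F) E) * prod g ((\<lambda>(x,v). {x,v}) ` Pairs)"
      unfolding eprod_def g_def[symmetric] edges_split[OF FV indep sym, folded Pairs_def]
      by (rule prod.union_disjoint) (use fe finP disj in auto)
    also have "prod g (edges (V - F) E) = prod gh (edges (V - F) E)"
    proof (rule prod.cong[OF refl])
      fix e assume "e \<in> edges (V - F) E"
      then obtain a b where e: "e = {a,b}" "a \<in> V - F" "b \<in> V - F" by (auto simp: edges_def)
      have "h \<phi> a = \<phi> a" "h \<phi> b = \<phi> b" using e hV by auto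
      thus "g e = gh e" unfolding g_def gh_def e(1) by simp
    qed
    also have "prod g ((\<lambda>(x,v). {x,v}) ` Pairs) = (\<Prod>(x,v)\<in>Pairs. if \<phi> x = \<phi> v then w {x,v} else 1)"
      by (subst prod.reindex[OF inj]) (auto simp: g_def intro!: prod.cong)
    also have "\<dots> = pprod (newp V E w F cu) (h \<phi>)"
    proof -
      have "pprod (newp V E w F cu) (h \<phi>) = (\<Prod>p\<in>Pairs. pf (h \<phi>) ((\<lambda>(x,v). (v, cu x, w {x,v})) p))"
        unfolding pprod_def newp_def Pairs_def[symmetric] prod_unfold_prod_mset multiset.map_comp
        by (simp add: comp_def)
      also have "\<dots> = (\<Prod>(x,v)\<in>Pairs. if \<phi> x = \<phi> v then w {x,v} else 1)"
      proof (rule prod.cong, simp, clarify)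
        fix x v assume "(x,v) \<in> Pairs"
        hence "x \<in> F" "v \<in> V" "v \<notin> F" using indep by (auto simp: Pairs_def)
        thus "pf (h \<phi>) (v, cu x, w {x,v}) = (if \<phi> x = \<phi> v then w {x,v} else 1)"
          using \<phi>F hV by (auto simp: pf_def)
      qed
      finally show ?thesis by simp
    qed
    finally have "eprod V E w \<phi> = eprod (V - F) E w (h \<phi>) * pprod (newp V E w F cu) (h \<phi>)"
      by (simp add: eprod_def gh_def)
    thus ?thesis using pp by (simp add: P'_def pprod_union)
  qed
  have "ZZ V E w k P U cu = (\<Sum>\<phi>\<in>A. c0 * (eprod (V - F) E w (h \<phi>) * pprod P' (h \<phi>)))"
    unfolding ZZ_def A_def[symmetric] by (rule sum.cong) (use key in auto)
  also have "\<dots> = c0 * (\<Sum>\<phi>\<in>A. eprod (V - F) E w (h \<phi>) * pprod P' (h \<phi>))"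
    by (simp add: sum_distrib_left)
  also have "(\<Sum>\<phi>\<in>A. eprod (V - F) E w (h \<phi>) * pprod P' (h \<phi>)) = (\<Sum>\<psi>\<in>B. eprod (V - F) E w \<psi> * pprod P' \<psi>)"
    by (rule sum.reindex_bij_betw[OF bij])
  finally show ?thesis unfolding ZZ_def B_def c0_def P'_def by simp
qed



definition pdeg :: "('a \<times> nat \<times> complex) multiset \<Rightarrow> 'a \<Rightarrow> nat" where
  "pdeg P v = size (filter_mset (\<lambda>p. fst p = v) P)"

definition Qat :: "('a \<times> nat \<times> complex) multiset \<Rightarrow> 'a \<Rightarrow> (nat \<times> complex) multiset" where
  "Qat P u = image_mset snd (filter_mset (\<lambda>p. fst p = u) P)"

definition colp :: "('a set \<Rightarrow> complex) \<Rightarrow> 'a \<Rightarrow> ('a \<Rightarrow> nat) \<Rightarrow> 'a set \<Rightarrow> ('a \<times> nat \<times> complex) multiset" where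
  "colp w u c N = image_mset (\<lambda>v. (v, c v, w {u,v})) (mset_set N)"

lemma pdeg_union: "pdeg (A + B) v = pdeg A v + pdeg B v"
  by (simp add: pdeg_def)

lemma pdeg_filter: "v \<noteq> u \<Longrightarrow> pdeg (filter_mset (\<lambda>p. fst p \<noteq> u) P) v = pdeg P v"
  unfolding pdeg_def filter_filter_mset by (metis (mono_tags, lifting) filter_mset_cong)

lemma pdeg_colp: "finite N \<Longrightarrow> pdeg (colp w u c N) v = (if v \<in> N then 1 else 0)"
proof -
  assume fN: "finite N"
  have "pdeg (colp w u c N) v = size (filter_mset (\<lambda>x. x = v) (mset_set N))"
    unfolding pdeg_def colp_def filter_mset_image_mset by simp
  also have "\<dots> = card {x\<in>N. x = v}" using fN by (simp add: filter_mset_mset_set)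
  also have "\<dots> = (if v \<in> N then 1 else 0)"
  proof (cases "v \<in> N")
    case True hence "{x\<in>N. x = v} = {v}" by auto
    thus ?thesis using True by simp
  next
    case False hence "{x\<in>N. x = v} = {}" by auto
    thus ?thesis using False by simp
  qed
  finally show ?thesis .
qed

lemma ZZ_cu_cong: "(\<forall>x\<in>U. cu x = cu' x) \<Longrightarrow> ZZ V E w k P U cu = ZZ V E w k P U cu'"
  unfolding ZZ_def by (metis (no_types, lifting))

lemma newp_single:
  assumes "finite V"
  shows "newp V E w {u} cu = colp w u (\<lambda>_. cu u) (nbrs V E u)"
proof -
  have "{(x,v). x \<in> {u} \<and> v \<in> V \<and> E x v} = (\<lambda>v. (u,v)) ` nbrs V E u" by (auto simp: nbrs_def)
  moreover have "inj_on (\<lambda>v. (u,v)) (nbrs V E u)" by (auto intro: inj_onI)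
  ultimately have "mset_set {(x,v). x \<in> {u} \<and> v \<in> V \<and> E x v} = image_mset (\<lambda>v. (u,v)) (mset_set (nbrs V E u))"
    by (simp add: image_mset_mset_set)
  thus ?thesis unfolding newp_def colp_def by (simp add: image_mset.compositionality comp_def)
qed

context prm begin

lemma cfac_eq: "pprod (filter_mset (\<lambda>p. fst p \<in> {u}) P) (\<lambda>_. l) = cf (Qat P u) l"
proof -
  have "filter_mset (\<lambda>p. fst p \<in> {u}) P = filter_mset (\<lambda>p. fst p = u) P" by simp
  moreover have pfe: "pf (\<lambda>_. l) = (\<lambda>x. if l = fst (snd x) then snd (snd x) else 1)"
    by (auto simp: pf_def fun_eq_iff)
  ultimately show ?thesis
    unfolding pprod_def cf_def Qat_def pfe by (simp add: image_mset.compositionality comp_def pf_def eq_commute)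
qed

end



context prm begin

definition valid :: "'a set \<Rightarrow> ('a \<Rightarrow> 'a \<Rightarrow> bool) \<Rightarrow> ('a set \<Rightarrow> complex) \<Rightarrow> ('a \<times> nat \<times> complex) multiset \<Rightarrow> bool" where
  "valid V E w P \<longleftrightarrow> finite V \<and> (\<forall>x y. E x y \<longrightarrow> E y x) \<and> (\<forall>x. \<not> E x x) \<and>
     (\<forall>p\<in>#P. fst p \<in> V \<and> fst (snd p) \<in> {1..k} \<and> adm (snd (snd p))) \<and>
     (\<forall>x\<in>V. \<forall>y\<in>V. E x y \<longrightarrow> adm (w {x,y})) \<and>
     (\<forall>v\<in>V. card (nbrs V E v) + pdeg P v \<le> \<Delta>)"

definition Zp :: "'a set \<Rightarrow> ('a \<Rightarrow> 'a \<Rightarrow> bool) \<Rightarrow> ('a set \<Rightarrow> complex) \<Rightarrow> ('a \<times> nat \<times> complex) multiset \<Rightarrow> complex" where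
  "Zp V E w P = ZZ V E w k P {} (\<lambda>_. 0)"

definition Yv :: "'a set \<Rightarrow> ('a \<Rightarrow> 'a \<Rightarrow> bool) \<Rightarrow> ('a set \<Rightarrow> complex) \<Rightarrow> ('a \<times> nat \<times> complex) multiset \<Rightarrow> 'a \<Rightarrow> nat \<Rightarrow> complex" where
  "Yv V E w P u l = Zp (V - {u}) E w (filter_mset (\<lambda>p. fst p \<noteq> u) P + colp w u (\<lambda>_. l) (nbrs V E u))"

lemma ZZ_fix:
  assumes val: "valid V E w P" and u: "u \<in> V" and l: "l \<in> {1..k}"
  shows "ZZ V E w k P {u} (\<lambda>_. l) = cf (Qat P u) l * Yv V E w P u l"
proof -
  have fin: "finite V" and sym: "\<forall>x y. E x y \<longrightarrow> E y x" and irr: "\<forall>x. \<not> E x x"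
    and Pin: "\<forall>p\<in>#P. fst p \<in> V" using val by (auto simp: valid_def)
  have "ZZ V E w k P {u} (\<lambda>_. l) = pprod (filter_mset (\<lambda>p. fst p \<in> {u}) P) (\<lambda>_. l) *
           ZZ (V - {u}) E w k (filter_mset (\<lambda>p. fst p \<notin> {u}) P + newp V E w {u} (\<lambda>_. l)) ({u} - {u}) (\<lambda>_. l)"
    by (rule ZZ_reduce) (use fin u sym irr l Pin in auto)
  also have "pprod (filter_mset (\<lambda>p. fst p \<in> {u}) P) (\<lambda>_. l) = cf (Qat P u) l" by (rule cfac_eq)
  also have "ZZ (V - {u}) E w k (filter_mset (\<lambda>p. fst p \<notin> {u}) P + newp V E w {u} (\<lambda>_. l)) ({u} - {u}) (\<lambda>_. l)
      = Yv V E w P u l"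
  proof -
    have e1: "{u} - {u} = {}" by simp
    have e2: "filter_mset (\<lambda>p. fst p \<notin> {u}) P = filter_mset (\<lambda>p. fst p \<noteq> u) P" by simp
    have e3: "ZZ (V - {u}) E w k X {} (\<lambda>_. l) = ZZ (V - {u}) E w k X {} (\<lambda>_. 0)" for X
      by (rule ZZ_cu_cong) simp
    show ?thesis unfolding Yv_def Zp_def newp_single[OF fin] e1 e2 e3 by simp
  qed
  finally show ?thesis .
qed

lemma Zp_split:
  assumes val: "valid V E w P" and u: "u \<in> V"
  shows "Zp V E w P = (\<Sum>l\<in>{1..k}. cf (Qat P u) l * Yv V E w P u l)"
proof -
  have fin: "finite V" using val by (simp add: valid_def)
  have "Zp V E w P = (\<Sum>l\<in>{1..k}. ZZ V E w k P (insert u {}) ((\<lambda>_. 0)(u:=l)))"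
    unfolding Zp_def by (rule ZZ_split[OF fin u]) simp
  also have "\<dots> = (\<Sum>l\<in>{1..k}. cf (Qat P u) l * Yv V E w P u l)"
  proof (rule sum.cong[OF refl])
    fix l assume l: "l \<in> {1..k}"
    have "ZZ V E w k P (insert u {}) ((\<lambda>_. 0)(u:=l)) = ZZ V E w k P {u} (\<lambda>_. l)"
      by (rule ZZ_cu_cong) simp
    thus "ZZ V E w k P (insert u {}) ((\<lambda>_. 0)(u:=l)) = cf (Qat P u) l * Yv V E w P u l"
      using ZZ_fix[OF val u l] by simp
  qed
  finally show ?thesis .
qed

lemma valid_remove:
  assumes val: "valid V E w P" and u: "u \<in> V" and c: "\<forall>v. c v \<in> {1..k}"
  shows "valid (V - {u}) E w (filter_mset (\<lambda>p. fst p \<noteq> u) P + colp w u c (nbrs V E u))"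
proof -
  have fin: "finite V" and sym: "\<forall>x y. E x y \<longrightarrow> E y x" and irr: "\<forall>x. \<not> E x x"
    and Pin: "\<forall>p\<in>#P. fst p \<in> V \<and> fst (snd p) \<in> {1..k} \<and> adm (snd (snd p))"
    and wadm: "\<forall>x\<in>V. \<forall>y\<in>V. E x y \<longrightarrow> adm (w {x,y})"
    and deg: "\<forall>v\<in>V. card (nbrs V E v) + pdeg P v \<le> \<Delta>" using val by (auto simp: valid_def)
  have fN: "finite (nbrs V E u)" using fin by (simp add: nbrs_def)
  have pend: "\<forall>p\<in>#filter_mset (\<lambda>p. fst p \<noteq> u) P + colp w u c (nbrs V E u).
      fst p \<in> V - {u} \<and> fst (snd p) \<in> {1..k} \<and> adm (snd (snd p))"
  proof
    fix p assume p: "p \<in># filter_mset (\<lambda>p. fst p \<noteq> u) P + colp w u c (nbrs V E u)"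
    show "fst p \<in> V - {u} \<and> fst (snd p) \<in> {1..k} \<and> adm (snd (snd p))"
    proof (cases "p \<in># filter_mset (\<lambda>p. fst p \<noteq> u) P")
      case True thus ?thesis using Pin by auto
    next
      case False
      hence "p \<in># colp w u c (nbrs V E u)" using p by auto
      then obtain v where v: "v \<in> nbrs V E u" "p = (v, c v, w {u,v})"
        using fN by (auto simp: colp_def)
      have "v \<noteq> u" using v irr by (auto simp: nbrs_def)
      thus ?thesis using v c wadm u by (auto simp: nbrs_def)
    qed
  qed
  have degs: "\<forall>v\<in>V - {u}. card (nbrs (V - {u}) E v) + pdeg (filter_mset (\<lambda>p. fst p \<noteq> u) P + colp w u c (nbrs V E u)) v \<le> \<Delta>"
  proof
    fix v assume v: "v \<in> V - {u}"
    have fv: "finite (nbrs V E v)" using fin by (simp add: nbrs_def)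
    have pd: "pdeg (filter_mset (\<lambda>p. fst p \<noteq> u) P + colp w u c (nbrs V E u)) v
        = pdeg P v + (if E u v then 1 else 0)"
      using v fN by (simp add: pdeg_union pdeg_filter pdeg_colp nbrs_def)
    have nb: "nbrs (V - {u}) E v = nbrs V E v - {u}" by (auto simp: nbrs_def)
    show "card (nbrs (V - {u}) E v) + pdeg (filter_mset (\<lambda>p. fst p \<noteq> u) P + colp w u c (nbrs V E u)) v \<le> \<Delta>"
    proof (cases "E u v")
      case True
      hence "u \<in> nbrs V E v" using sym u by (auto simp: nbrs_def)
      moreover have "0 < card (nbrs V E v)" using fv calculation card_gt_0_iff by blast
      ultimately have ce: "card (nbrs V E v - {u}) + 1 = card (nbrs V E v)"
        using fv by (simp add: card_Diff_singleton)
      have dv: "card (nbrs V E v) + pdeg P v \<le> \<Delta>" using deg v by auto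
      have pd': "pdeg (filter_mset (\<lambda>p. fst p \<noteq> u) P + colp w u c (nbrs V E u)) v = pdeg P v + 1"
        using pd True by simp
      show ?thesis unfolding nb pd' using dv ce by linarith
    next
      case False
      hence "u \<notin> nbrs V E v" using sym by (auto simp: nbrs_def)
      hence ne: "nbrs V E v - {u} = nbrs V E v" by auto
      have dv: "card (nbrs V E v) + pdeg P v \<le> \<Delta>" using deg v by auto
      have pd': "pdeg (filter_mset (\<lambda>p. fst p \<noteq> u) P + colp w u c (nbrs V E u)) v = pdeg P v"
        using pd False by simp
      show ?thesis unfolding nb pd' ne using dv by linarith
    qed
  qed
  have f1: "finite (V - {u})" using fin by simp
  have f5: "\<forall>x\<in>V - {u}. \<forall>y\<in>V - {u}. E x y \<longrightarrow> adm (w {x,y})" using wadm by blast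
  show ?thesis unfolding valid_def by (intro conjI f1 sym irr pend f5 degs)
qed

end


context prm begin

definition Bprop :: "'a set \<Rightarrow> ('a \<Rightarrow> 'a \<Rightarrow> bool) \<Rightarrow> ('a set \<Rightarrow> complex) \<Rightarrow> ('a \<times> nat \<times> complex) multiset \<Rightarrow> bool" where
  "Bprop V E w P \<longleftrightarrow> (\<forall>P0 v x a b. P = P0 + {#(v,b,x)#} \<and> a \<in> {1..k} \<longrightarrow>
      cmod (Zp V E w (P0 + {#(v,a,x)#}) - Zp V E w P) \<le> K * cmod (Zp V E w P))"

definition IHn :: "nat \<Rightarrow> ('a \<Rightarrow> 'a \<Rightarrow> bool) \<Rightarrow> ('a set \<Rightarrow> complex) \<Rightarrow> bool" where
  "IHn n E w \<longleftrightarrow> (\<forall>V P. valid V E w P \<and> card V = n \<longrightarrow> Zp V E w P \<noteq> 0 \<and> Bprop V E w P)"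

lemma colp_cong: "(\<And>v. v \<in> N \<Longrightarrow> c v = c' v) \<Longrightarrow> colp w u c N = colp w u c' N"
proof -
  assume h: "\<And>v. v \<in> N \<Longrightarrow> c v = c' v"
  show ?thesis unfolding colp_def
  proof (cases "finite N")
    case True thus "image_mset (\<lambda>v. (v, c v, w {u, v})) (mset_set N) = image_mset (\<lambda>v. (v, c' v, w {u, v})) (mset_set N)"
      using h by (intro image_mset_cong) auto
  next
    case False thus "image_mset (\<lambda>v. (v, c v, w {u, v})) (mset_set N) = image_mset (\<lambda>v. (v, c' v, w {u, v})) (mset_set N)"
      by simp
  qed
qed

lemma colp_remove: "finite N \<Longrightarrow> a \<in> N \<Longrightarrow> colp w u c N = add_mset (a, c a, w {u,a}) (colp w u c (N - {a}))"
  unfolding colp_def by (simp add: mset_set.remove)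

lemma tele:
  assumes val: "valid V E w P" and u: "u \<in> V" and l: "l \<in> {1..k}" "l' \<in> {1..k}"
    and IH: "IHn (card V - 1) E w"
  shows "\<exists>\<rho> \<sigma>. Yv V E w P u l = Yv V E w P u l' * rcis \<rho> \<sigma> \<and> 0 < \<rho> \<and>
           \<rho> \<le> (1 + K) ^ card (nbrs V E u) \<and> \<bar>\<sigma>\<bar> \<le> real (card (nbrs V E u)) * \<theta>"
proof -
  define N where "N = nbrs V E u"
  define V1 where "V1 = V - {u}"
  define P1 where "P1 = filter_mset (\<lambda>p. fst p \<noteq> u) P"
  define col where "col S = (\<lambda>v::'a. if v \<in> S then l else l')" for S :: "'a set"
  define M where "M S = P1 + colp w u (col S) N" for S :: "'a set"
  have fin: "finite V" using val by (simp add: valid_def)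
  have fN: "finite N" using fin by (simp add: N_def nbrs_def)
  have cV1: "card V1 = card V - 1" using fin u by (simp add: V1_def)
  have valM: "valid V1 E w (M S)" for S
    unfolding M_def P1_def V1_def N_def by (rule valid_remove[OF val u]) (use l in \<open>auto simp: col_def\<close>)
  have IH': "Zp V1 E w (M S) \<noteq> 0 \<and> Bprop V1 E w (M S)" for S
    using IH valM cV1 by (auto simp: IHn_def)
  have claim: "\<exists>\<rho> \<sigma>. Zp V1 E w (M S) = Zp V1 E w (M {}) * rcis \<rho> \<sigma> \<and> 0 < \<rho> \<and>
           \<rho> \<le> (1 + K) ^ card S \<and> \<bar>\<sigma>\<bar> \<le> real (card S) * \<theta>" if "S \<subseteq> N" for S
    using finite_subset[OF that fN] that
  proof (induction S rule: finite_induct)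
    case empty
    show ?case by (intro exI[of _ 1] exI[of _ 0]) (simp add: rcis_def)
  next
    case (insert a F)
    then obtain \<rho> \<sigma> where rs: "Zp V1 E w (M F) = Zp V1 E w (M {}) * rcis \<rho> \<sigma>" "0 < \<rho>"
      "\<rho> \<le> (1 + K) ^ card F" "\<bar>\<sigma>\<bar> \<le> real (card F) * \<theta>" by auto
    have aN: "a \<in> N" using insert by auto
    define X where "X = P1 + colp w u (col F) (N - {a})"
    define x where "x = w {u,a}"
    have MF: "M F = X + {#(a, l', x)#}"
      unfolding M_def X_def x_def using colp_remove[OF fN aN, of w u "col F"] insert(2)
      by (simp add: col_def)
    have cc: "colp w u (col (insert a F)) (N - {a}) = colp w u (col F) (N - {a})"
      by (rule colp_cong) (auto simp: col_def)
    have MI: "M (insert a F) = X + {#(a, l, x)#}"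
      unfolding M_def X_def x_def using colp_remove[OF fN aN, of w u "col (insert a F)"] cc
      by (simp add: col_def)
    have nz: "Zp V1 E w (M F) \<noteq> 0" and B: "Bprop V1 E w (M F)" using IH' by auto
    have "cmod (Zp V1 E w (X + {#(a, l, x)#}) - Zp V1 E w (M F)) \<le> K * cmod (Zp V1 E w (M F))"
      using B l unfolding Bprop_def MF by blast
    hence dif: "cmod (Zp V1 E w (M (insert a F)) - Zp V1 E w (M F)) \<le> K * cmod (Zp V1 E w (M F))"
      unfolding MI .
    define q where "q = Zp V1 E w (M (insert a F)) / Zp V1 E w (M F)"
    have qe: "Zp V1 E w (M (insert a F)) = Zp V1 E w (M F) * q" using nz by (simp add: q_def)
    have "cmod (q - 1) = cmod (Zp V1 E w (M (insert a F)) - Zp V1 E w (M F)) / cmod (Zp V1 E w (M F))"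
      using nz by (simp add: q_def norm_divide[symmetric] diff_divide_distrib)
    also have "\<dots> \<le> K" using dif nz by (simp add: divide_le_eq mult.commute)
    finally have q1: "cmod (q - 1) \<le> K" .
    have qz: "q \<noteq> 0" and qa: "\<bar>Arg q\<bar> \<le> arcsin K" and qm: "cmod q \<le> 1 + K"
      using arcsin_disc[OF K q1] by auto
    have "Zp V1 E w (M (insert a F)) = Zp V1 E w (M {}) * (rcis \<rho> \<sigma> * rcis (cmod q) (Arg q))"
      using qe rs(1) by (simp add: rcis_cmod_Arg mult.assoc)
    also have "rcis \<rho> \<sigma> * rcis (cmod q) (Arg q) = rcis (\<rho> * cmod q) (\<sigma> + Arg q)" by (simp add: rcis_mult)
    finally have e: "Zp V1 E w (M (insert a F)) = Zp V1 E w (M {}) * rcis (\<rho> * cmod q) (\<sigma> + Arg q)" .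
    have c: "card (insert a F) = Suc (card F)" using insert by simp
    have "\<rho> * cmod q \<le> (1 + K) ^ card F * (1 + K)"
      using rs qm K by (intro mult_mono) auto
    moreover have "\<bar>\<sigma> + Arg q\<bar> \<le> real (card F) * \<theta> + \<theta>"
      using rs(4) qa theta_def by (simp add: abs_triangle_ineq order_trans add_mono)
    moreover have "0 < \<rho> * cmod q" using rs qz by simp
    ultimately show ?case using e c
      by (intro exI[of _ "\<rho> * cmod q"] exI[of _ "\<sigma> + Arg q"]) (simp add: algebra_simps)
  qed
  have MN: "M N = filter_mset (\<lambda>p. fst p \<noteq> u) P + colp w u (\<lambda>_. l) (nbrs V E u)"
  proof -
    have "colp w u (col N) N = colp w u (\<lambda>_. l) N" by (rule colp_cong) (simp add: col_def)
    thus ?thesis unfolding M_def P1_def N_def by simp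
  qed
  have M0: "M {} = filter_mset (\<lambda>p. fst p \<noteq> u) P + colp w u (\<lambda>_. l') (nbrs V E u)"
    unfolding M_def P1_def N_def by (simp add: col_def)
  show ?thesis using claim[of N] unfolding Yv_def MN[symmetric] M0[symmetric] V1_def[symmetric] N_def
    by simp
qed


lemma deg_u: "valid V E w P \<Longrightarrow> u \<in> V \<Longrightarrow> card (nbrs V E u) + pdeg P u \<le> \<Delta>"
  by (simp add: valid_def)

lemma Cstar:
  assumes val: "valid V E w P" and u: "u \<in> V" and IH: "IHn (card V - 1) E w"
  shows "\<exists>\<psi>. Yok (card (nbrs V E u)) (Yv V E w P u) \<psi>"
proof -
  define d where "d = card (nbrs V E u)"
  define Y where "Y = Yv V E w P u"
  have fin: "finite V" using val by (simp add: valid_def)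
  have dD: "d \<le> \<Delta>" using deg_u[OF val u] by (simp add: d_def)
  have nz: "\<forall>l\<in>{1..k}. Y l \<noteq> 0"
  proof
    fix l assume l: "l \<in> {1..k}"
    have "valid (V - {u}) E w (filter_mset (\<lambda>p. fst p \<noteq> u) P + colp w u (\<lambda>_. l) (nbrs V E u))"
      by (rule valid_remove[OF val u]) (use l in auto)
    moreover have "card (V - {u}) = card V - 1" using fin u by simp
    ultimately show "Y l \<noteq> 0" using IH unfolding IHn_def Y_def Yv_def by blast
  qed
  have tl: "\<exists>\<rho> \<sigma>. Y l = Y l' * rcis \<rho> \<sigma> \<and> 0 < \<rho> \<and> \<rho> \<le> (1 + K) ^ d \<and> \<bar>\<sigma>\<bar> \<le> real d * \<theta>"
    if "l \<in> {1..k}" "l' \<in> {1..k}" for l l'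
    using tele[OF val u that IH] by (simp add: Y_def d_def)
  have D: "real d * \<theta> < pi / 2"
  proof -
    have "real d * \<theta> \<le> real \<Delta> * \<theta>" using dD theta_range by (intro mult_right_mono) auto
    thus ?thesis using Delta_theta by linarith
  qed
  have k1: "1 \<in> {1..k}" using k_gt by simp
  obtain \<psi> where \<psi>: "\<forall>l\<in>{1..k}. Y l = rcis (cmod (Y l)) (\<psi> l) \<and> (\<forall>l'\<in>{1..k}. \<bar>\<psi> l - \<psi> l'\<bar> \<le> real d * \<theta>)"
    using phase[OF k1 nz _ D] tl by blast
  have rat: "cmod (Y l) \<le> (1 + K) ^ d * cmod (Y l')" if lc: "l \<in> {1..k}" "l' \<in> {1..k}" for l l'
  proof -
    obtain \<rho> \<sigma> where r: "Y l = Y l' * rcis \<rho> \<sigma>" "0 < \<rho>" "\<rho> \<le> (1 + K) ^ d" using tl[OF lc] by blast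
    have "cmod (Y l) = cmod (Y l') * \<rho>" using r by (simp add: norm_mult)
    also have "\<dots> \<le> cmod (Y l') * (1 + K) ^ d" using r by (intro mult_left_mono) auto
    finally show ?thesis by (simp add: mult.commute)
  qed
  have "Yok d Y \<psi>" unfolding Yok_def using nz \<psi> rat by blast
  thus ?thesis by (auto simp: Y_def d_def)
qed

lemma Qat_props:
  assumes val: "valid V E w P"
  shows "\<forall>q\<in>#Qat P u. fst q \<in> {1..k} \<and> adm (snd q)" "size (Qat P u) = pdeg P u"
  using val by (auto simp: Qat_def valid_def pdeg_def)

lemma Aok:
  assumes val: "valid V E w P" and ne: "V \<noteq> {}" and IH: "IHn (card V - 1) E w"
  shows "Zp V E w P \<noteq> 0"
proof -
  obtain u where u: "u \<in> V" using ne by auto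
  define d where "d = card (nbrs V E u)"
  obtain \<psi> where Y: "Yok d (Yv V E w P u) \<psi>" using Cstar[OF val u IH] by (auto simp: d_def)
  have dQ: "d + size (Qat P u) \<le> \<Delta>" using deg_u[OF val u] Qat_props[OF val] by (simp add: d_def)
  have "Min (cmod ` (Yv V E w P u) ` {1..k}) * den d \<le> cmod (\<Sum>l\<in>{1..k}. cf (Qat P u) l * Yv V E w P u l)"
    by (rule LB[OF Y Qat_props(1)[OF val] dQ])
  moreover have "0 < Min (cmod ` (Yv V E w P u) ` {1..k})" using Yok_mu(1)[OF Y] .
  moreover have "0 < den d" using dQ by (intro den_pos) simp
  ultimately have "0 < cmod (Zp V E w P)" using Zp_split[OF val u]
    by (metis mult_pos_pos order_less_le_trans)
  thus ?thesis by simp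
qed

lemma sum_mod1:
  fixes g :: "nat \<Rightarrow> complex"
  assumes "finite C" "b \<in> C"
  shows "(\<Sum>l\<in>C. (if l = b then x else 1) * g l) = (\<Sum>l\<in>C. g l) + (x - 1) * g b"
proof -
  have "(\<Sum>l\<in>C. (if l = b then x else 1) * g l) = (\<Sum>l\<in>C. g l + (if l = b then (x - 1) * g l else 0))"
    by (rule sum.cong) (auto simp: algebra_simps)
  also have "\<dots> = (\<Sum>l\<in>C. g l) + (x - 1) * g b"
    using assms by (simp add: sum.distrib)
  finally show ?thesis .
qed

lemma cf_add: "cf (add_mset (c, x) Q) l = (if l = c then x else 1) * cf Q l"
  by (simp add: cf_def)

lemma Bok:
  assumes val: "valid V E w P" and IH: "IHn (card V - 1) E w"
  shows "Bprop V E w P"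
  unfolding Bprop_def
proof (intro allI impI)
  fix P0 v x a b
  assume h: "P = P0 + {#(v, b, x)#} \<and> a \<in> {1..k}"
  hence P: "P = P0 + {#(v, b, x)#}" and a: "a \<in> {1..k}" by auto
  have pin: "(v,b,x) \<in># P" using P by simp
  have v: "v \<in> V" and b: "b \<in> {1..k}" and x: "adm x" using val pin by (auto simp: valid_def)
  define P' where "P' = P0 + {#(v, a, x)#}"
  have val': "valid V E w P'"
    using val a unfolding valid_def P P'_def by (auto simp: pdeg_def)
  define d where "d = card (nbrs V E v)"
  define Y where "Y = Yv V E w P v"
  define Q0 where "Q0 = Qat P0 v"
  have YY: "Yv V E w P' v = Y" unfolding Y_def Yv_def P P'_def by (simp add: fun_eq_iff)
  have QP: "Qat P v = add_mset (b, x) Q0" and QP': "Qat P' v = add_mset (a, x) Q0"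
    unfolding Q0_def Qat_def P P'_def by simp_all
  obtain \<psi> where Yk: "Yok d Y \<psi>" using Cstar[OF val v IH] by (auto simp: Y_def d_def)
  define g where "g l = cf Q0 l * Y l" for l
  have ZP: "Zp V E w P = (\<Sum>l\<in>{1..k}. g l) + (x - 1) * g b"
  proof -
    have "Zp V E w P = (\<Sum>l\<in>{1..k}. (if l = b then x else 1) * g l)"
      unfolding Zp_split[OF val v] QP cf_add g_def Y_def by (simp add: mult.assoc)
    thus ?thesis using sum_mod1[of "{1..k}" b x g] b by simp
  qed
  have ZP': "Zp V E w P' = (\<Sum>l\<in>{1..k}. g l) + (x - 1) * g a"
  proof -
    have "Zp V E w P' = (\<Sum>l\<in>{1..k}. (if l = a then x else 1) * g l)"
      unfolding Zp_split[OF val' v] QP' cf_add g_def YY by (simp add: mult.assoc)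
    thus ?thesis using sum_mod1[of "{1..k}" a x g] a by simp
  qed
  have diff: "Zp V E w P' - Zp V E w P = (x - 1) * (cf Q0 a * Y a - cf Q0 b * Y b)"
    unfolding ZP ZP' g_def by (simp add: algebra_simps)
  have Q0p: "\<forall>q\<in>#Q0. fst q \<in> {1..k} \<and> adm (snd q)"
    using Qat_props(1)[OF val, of v] QP by auto
  have sQ: "d + size Q0 + 1 \<le> \<Delta>"
    using deg_u[OF val v] Qat_props(2)[OF val, of v] QP by (simp add: d_def)
  have "cmod (Zp V E w P' - Zp V E w P) \<le> K * (Min (cmod ` Y ` {1..k}) * den d)"
    unfolding diff by (rule UB[OF Yk Q0p sQ a b x])
  also have "\<dots> \<le> K * cmod (Zp V E w P)"
  proof -
    have dQ: "d + size (Qat P v) \<le> \<Delta>" using deg_u[OF val v] Qat_props(2)[OF val] by (simp add: d_def)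
    have "Min (cmod ` Y ` {1..k}) * den d \<le> cmod (\<Sum>l\<in>{1..k}. cf (Qat P v) l * Y l)"
      by (rule LB[OF Yk Qat_props(1)[OF val] dQ])
    also have "\<dots> = cmod (Zp V E w P)" using Zp_split[OF val v] by (simp add: Y_def)
    finally show ?thesis using K by (intro mult_left_mono) auto
  qed
  finally show "cmod (Zp V E w (P0 + {#(v, a, x)#}) - Zp V E w P) \<le> K * cmod (Zp V E w P)"
    by (simp add: P'_def)
qed

lemma Zp_empty: "Zp {} E w {#} = 1"
  unfolding Zp_def ZZ_def eprod_def pprod_def by (simp add: edges_def PiE_empty_domain)

lemma IHn_all: "IHn n E w"
proof (induction n)
  case 0
  show ?case unfolding IHn_def
  proof (intro allI impI)
    fix V P assume h: "valid V E w P \<and> card V = 0"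
    hence V0: "V = {}" by (auto simp: valid_def)
    have "\<forall>p\<in>#P. fst p \<in> V" using h by (simp add: valid_def)
    hence "set_mset P = {}" using V0 by blast
    hence "P = {#}" by simp
    with V0 show "Zp V E w P \<noteq> 0 \<and> Bprop V E w P"
      by (auto simp: Zp_empty Bprop_def)
  qed
next
  case (Suc n)
  show ?case unfolding IHn_def
  proof (intro allI impI)
    fix V P assume h: "valid V E w P \<and> card V = Suc n"
    hence ne: "V \<noteq> {}" by auto
    have IH: "IHn (card V - 1) E w" using h Suc by simp
    show "Zp V E w P \<noteq> 0 \<and> Bprop V E w P" using Aok[OF _ ne IH] Bok[OF _ IH] h by auto
  qed
qed

end


lemma fcol_mem:
  assumes "distinct W" "length L = length W" "x \<in> set W"
  shows "fcol W L x \<in> set L"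
proof -
  obtain i where i: "i < length W" "W ! i = x" using assms(3) by (auto simp: in_set_conv_nth)
  have "fcol W L x = L ! i" using map_of_zip_nth[of W L i] assms i by (simp add: fcol_def)
  thus ?thesis using i assms(2) by simp
qed

lemma fcol_snoc:
  assumes "length L' = length W'" "u \<notin> set W'"
  shows "x \<in> set W' \<Longrightarrow> fcol (W' @ [u]) (L' @ [l]) x = fcol W' L' x"
    and "fcol (W' @ [u]) (L' @ [l]) u = l"
proof -
  have z: "map_of (zip (W' @ [u]) (L' @ [l])) = map_of [(u,l)] ++ map_of (zip W' L')"
    using assms(1) by (simp add: zip_append map_of_append)
  show "x \<in> set W' \<Longrightarrow> fcol (W' @ [u]) (L' @ [l]) x = fcol W' L' x"
  proof -
    assume "x \<in> set W'"
    hence "x \<in> dom (map_of (zip W' L'))" using assms(1) by (simp add: dom_map_of_zip)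
    thus ?thesis unfolding fcol_def z by (auto simp: map_add_dom_app_simps)
  qed
  have "u \<notin> dom (map_of (zip W' L'))" using assms by (simp add: dom_map_of_zip)
  thus "fcol (W' @ [u]) (L' @ [l]) u = l" unfolding fcol_def z by (simp add: map_add_dom_app_simps)
qed

lemma newp_cong:
  "(\<And>x. x \<in> F \<Longrightarrow> c x = c' x) \<Longrightarrow> newp V E w F c = newp V E w F c'"
  unfolding newp_def
  by (cases "finite {(x,v). x \<in> F \<and> v \<in> V \<and> E x v}") (auto intro!: image_mset_cong)

context prm begin

lemma valid_trans:
  assumes sg: "simple_graph V E" and dg: "max_deg_le V E \<Delta>" and wt: "\<forall>e\<in>edges V E. adm (w e)"
    and FV: "F \<subseteq> V" and ind: "\<forall>x\<in>F. \<forall>y\<in>F. \<not> E x y" and col: "\<forall>x\<in>F. c x \<in> {1..k}"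
  shows "valid (V - F) E w (newp V E w F c)"
proof -
  have fin: "finite V" and Ein: "\<forall>u v. E u v \<longrightarrow> u \<in> V \<and> v \<in> V \<and> u \<noteq> v \<and> E v u"
    using sg by (auto simp: simple_graph_def)
  have sym: "\<forall>x y. E x y \<longrightarrow> E y x" and irr: "\<forall>x. \<not> E x x" using Ein by auto
  define Pairs where "Pairs = {(x,v). x \<in> F \<and> v \<in> V \<and> E x v}"
  have fP: "finite Pairs" unfolding Pairs_def
    by (rule finite_subset[of _ "V \<times> V"]) (use fin FV in auto)
  have edge: "{x,y} \<in> edges V E" if "x \<in> V" "y \<in> V" "E x y" for x y
    using that by (auto simp: edges_def)
  have pend: "\<forall>p\<in>#newp V E w F c. fst p \<in> V - F \<and> fst (snd p) \<in> {1..k} \<and> adm (snd (snd p))"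
  proof
    fix p assume "p \<in># newp V E w F c"
    then obtain x v where xv: "(x,v) \<in> Pairs" "p = (v, c x, w {x,v})"
      using fP unfolding newp_def Pairs_def[symmetric] by auto
    have "x \<in> F" "v \<in> V" "E x v" using xv by (auto simp: Pairs_def)
    moreover hence "v \<notin> F" using ind by auto
    moreover have "x \<in> V" using \<open>x \<in> F\<close> FV by auto
    ultimately show "fst p \<in> V - F \<and> fst (snd p) \<in> {1..k} \<and> adm (snd (snd p))"
      using xv col wt edge by auto
  qed
  have wadm: "\<forall>x\<in>V - F. \<forall>y\<in>V - F. E x y \<longrightarrow> adm (w {x,y})" using wt edge by auto
  have degs: "\<forall>v\<in>V - F. card (nbrs (V - F) E v) + pdeg (newp V E w F c) v \<le> \<Delta>"
  proof
    fix v assume v: "v \<in> V - F"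
    have pd: "pdeg (newp V E w F c) v = card {p \<in> Pairs. snd p = v}"
      unfolding pdeg_def newp_def Pairs_def[symmetric] filter_mset_image_mset
      using fP by (simp add: filter_mset_mset_set case_prod_beta)
    have "{p \<in> Pairs. snd p = v} = (\<lambda>x. (x,v)) ` (nbrs V E v \<inter> F)"
      using sym FV v by (auto simp: Pairs_def nbrs_def)
    moreover have "inj_on (\<lambda>x. (x,v)) (nbrs V E v \<inter> F)" by (auto intro: inj_onI)
    ultimately have pd2: "pdeg (newp V E w F c) v = card (nbrs V E v \<inter> F)"
      using pd by (simp add: card_image)
    have nb: "nbrs (V - F) E v = nbrs V E v - F" by (auto simp: nbrs_def)
    have fv: "finite (nbrs V E v)" using fin by (simp add: nbrs_def)
    have "card (nbrs V E v - F) + card (nbrs V E v \<inter> F) = card (nbrs V E v)"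
    proof -
      have "nbrs V E v = (nbrs V E v - F) \<union> (nbrs V E v \<inter> F)" by auto
      moreover have "(nbrs V E v - F) \<inter> (nbrs V E v \<inter> F) = {}" by auto
      ultimately show ?thesis using fv
        by (metis card_Un_disjoint finite_Diff finite_Int)
    qed
    moreover have "card (nbrs V E v) \<le> \<Delta>" using dg v by (auto simp: max_deg_le_def)
    ultimately show "card (nbrs (V - F) E v) + pdeg (newp V E w F c) v \<le> \<Delta>"
      unfolding nb pd2 by linarith
  qed
  have f1: "finite (V - F)" using fin by simp
  show ?thesis unfolding valid_def by (intro conjI f1 sym irr pend wadm degs)
qed


lemma Zr_Zp:
  assumes sg: "simple_graph V E" and dW: "distinct W" and li: "leaf_independent V E (set W)"
    and L: "length L = length W" "set L \<subseteq> {1..k}"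
  shows "Zr V E w k W L = Zp (V - set W) E w (newp V E w (set W) (fcol W L))"
proof -
  have fin: "finite V" and sym: "\<forall>x y. E x y \<longrightarrow> E y x" using sg by (auto simp: simple_graph_def)
  have FV: "set W \<subseteq> V" and ind: "\<forall>x\<in>set W. \<forall>y\<in>set W. \<not> E x y" using li by (auto simp: leaf_independent_def)
  have col: "\<forall>x\<in>set W. fcol W L x \<in> {1..k}" using fcol_mem[OF dW L(1)] L(2) by blast
  have "Zr V E w k W L = ZZ V E w k {#} (set W) (fcol W L)" by (rule Zr_ZZ[OF dW L(1)])
  also have "\<dots> = pprod (filter_mset (\<lambda>p. fst p \<in> set W) {#}) (fcol W L) *
      ZZ (V - set W) E w k (filter_mset (\<lambda>p. fst p \<notin> set W) {#} + newp V E w (set W) (fcol W L)) (set W - set W) (fcol W L)"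
    by (rule ZZ_reduce[OF fin FV subset_refl ind sym col]) simp
  also have "\<dots> = ZZ (V - set W) E w k (newp V E w (set W) (fcol W L)) {} (fcol W L)"
    by (simp add: pprod_def)
  also have "\<dots> = Zp (V - set W) E w (newp V E w (set W) (fcol W L))"
    unfolding Zp_def by (rule ZZ_cu_cong) simp
  finally show ?thesis .
qed

lemma ratio_bound:
  assumes nz: "Z' \<noteq> 0" and h: "cmod (Z - Z') \<le> K * cmod Z'"
  shows "cangle Z Z' \<le> \<theta> \<and> cmod Z / cmod Z' \<le> 1 + K"
proof -
  define q where "q = Z / Z'"
  have Zq: "Z = Z' * q" using nz by (simp add: q_def)
  have "cmod (q - 1) = cmod (Z - Z') / cmod Z'" using nz
    by (simp add: q_def norm_divide[symmetric] diff_divide_distrib)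
  also have "\<dots> \<le> K" using h nz by (simp add: divide_le_eq mult.commute)
  finally have q1: "cmod (q - 1) \<le> K" .
  have qz: "q \<noteq> 0" and qa: "\<bar>Arg q\<bar> \<le> arcsin K" and qm: "cmod q \<le> 1 + K"
    using arcsin_disc[OF K q1] by auto
  have Z': "Z' = rcis (cmod Z') (Arg Z')" by (simp add: rcis_cmod_Arg)
  have Z: "Z = rcis (cmod Z' * cmod q) (Arg Z' + Arg q)"
    using Zq by (metis rcis_cmod_Arg rcis_mult)
  have "cangle Z Z' = \<bar>(Arg Z' + Arg q) - Arg Z'\<bar>"
  proof -
    have "\<bar>Arg q\<bar> \<le> pi" using Arg_bounded[of q] by auto
    hence "cangle (rcis (cmod Z' * cmod q) (Arg Z' + Arg q)) (rcis (cmod Z') (Arg Z')) = \<bar>(Arg Z' + Arg q) - Arg Z'\<bar>"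
      using nz qz by (intro cangle_rcis) auto
    thus ?thesis using Z Z' by metis
  qed
  hence "cangle Z Z' \<le> \<theta>" using qa theta_def by simp
  moreover have "cmod Z / cmod Z' = cmod q" using Zq nz by (simp add: norm_mult)
  ultimately show ?thesis using qm by simp
qed

lemma newp_insert:
  assumes fin: "finite V" and u: "u \<notin> F" and nu: "nbrs V E u = {vu}" and FV: "F \<subseteq> V"
  shows "newp V E w (insert u F) c = newp V E w F c + {#(vu, c u, w {u,vu})#}"
proof -
  have e: "{(x,v). x \<in> insert u F \<and> v \<in> V \<and> E x v} = {(x,v). x \<in> F \<and> v \<in> V \<and> E x v} \<union> {(u,vu)}"
    using nu by (auto simp: nbrs_def)
  have f: "finite {(x,v). x \<in> F \<and> v \<in> V \<and> E x v}"
    by (rule finite_subset[of _ "V \<times> V"]) (use fin FV in auto)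
  have dj: "{(x,v). x \<in> F \<and> v \<in> V \<and> E x v} \<inter> {(u,vu)} = {}" using u by auto
  have nin: "(u,vu) \<notin> {(x,v). x \<in> F \<and> v \<in> V \<and> E x v}" using u by auto
  have "mset_set ({(x,v). x \<in> F \<and> v \<in> V \<and> E x v} \<union> {(u,vu)})
     = add_mset (u,vu) (mset_set {(x,v). x \<in> F \<and> v \<in> V \<and> E x v})"
    using mset_set.insert[OF f nin] by simp
  thus ?thesis unfolding newp_def e by simp
qed

lemma Qat_newp:
  assumes fin: "finite V" and FV: "F \<subseteq> V" and u: "u \<in> V"
  shows "Qat (newp V E w F c) u = image_mset (\<lambda>x. (c x, w {x,u})) (mset_set {x\<in>F. E x u})"
proof -
  define Pairs where "Pairs = {(x,v). x \<in> F \<and> v \<in> V \<and> E x v}"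
  have fP: "finite Pairs" unfolding Pairs_def
    by (rule finite_subset[of _ "V \<times> V"]) (use fin FV in auto)
  have "{p \<in> Pairs. snd p = u} = (\<lambda>x. (x,u)) ` {x\<in>F. E x u}" using u by (auto simp: Pairs_def)
  moreover have "inj_on (\<lambda>x. (x,u)) {x\<in>F. E x u}" by (auto intro: inj_onI)
  ultimately have m: "mset_set {p \<in> Pairs. snd p = u} = image_mset (\<lambda>x. (x,u)) (mset_set {x\<in>F. E x u})"
    by (simp add: image_mset_mset_set)
  show ?thesis
    unfolding Qat_def newp_def Pairs_def[symmetric] filter_mset_image_mset
    using fP m by (simp add: filter_mset_mset_set case_prod_beta multiset.map_comp comp_def)
qed

lemma cf_set:
  assumes "finite A"
  shows "cf (image_mset (\<lambda>x. (c x, z x)) (mset_set A)) l = (\<Prod>x\<in>A. if l = c x then z x else 1)"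
proof -
  have e: "(\<lambda>q. if l = fst q then snd q else 1) \<circ> (\<lambda>x. (c x, z x)) = (\<lambda>x. if l = c x then z x else 1)"
    by (rule ext) simp
  show ?thesis unfolding cf_def multiset.map_comp e by (simp add: prod_unfold_prod_mset)
qed


lemma IH_valid: "valid V E w P \<Longrightarrow> Zp V E w P \<noteq> 0 \<and> Bprop V E w P"
  using IHn_all[of "card V" E w] by (auto simp: IHn_def)

lemma A_final:
  assumes sg: "simple_graph V E" and dg: "max_deg_le V E \<Delta>" and wt: "\<forall>e\<in>edges V E. adm (w e)"
    and h: "distinct W \<and> leaf_independent V E (set W) \<and> length L = length W \<and> set L \<subseteq> {1..k}"
  shows "Zr V E w k W L \<noteq> 0"
proof -
  have dW: "distinct W" and li: "leaf_independent V E (set W)" and L: "length L = length W" "set L \<subseteq> {1..k}"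
    using h by auto
  have FV: "set W \<subseteq> V" and ind: "\<forall>x\<in>set W. \<forall>y\<in>set W. \<not> E x y" using li by (auto simp: leaf_independent_def)
  have col: "\<forall>x\<in>set W. fcol W L x \<in> {1..k}" using fcol_mem[OF dW L(1)] L(2) by blast
  have "valid (V - set W) E w (newp V E w (set W) (fcol W L))"
    by (rule valid_trans[OF sg dg wt FV ind col])
  hence "Zp (V - set W) E w (newp V E w (set W) (fcol W L)) \<noteq> 0" using IH_valid by blast
  thus ?thesis using Zr_Zp[OF sg dW li L] by simp
qed

lemma B_final:
  assumes sg: "simple_graph V E" and dg: "max_deg_le V E \<Delta>" and wt: "\<forall>e\<in>edges V E. adm (w e)"
    and h: "distinct (W' @ [u]) \<and> leaf_independent V E (set (W' @ [u]))
            \<and> length L' = length W' \<and> set L' \<subseteq> {1..k} \<and> l \<in> {1..k} \<and> l' \<in> {1..k}"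
  shows "cangle (Zr V E w k (W' @ [u]) (L' @ [l])) (Zr V E w k (W' @ [u]) (L' @ [l'])) \<le> \<theta>
          \<and> cmod (Zr V E w k (W' @ [u]) (L' @ [l])) / cmod (Zr V E w k (W' @ [u]) (L' @ [l'])) \<le> 1 + K"
proof -
  have d: "distinct (W' @ [u])" and li: "leaf_independent V E (set (W' @ [u]))"
    and L: "length L' = length W'" "set L' \<subseteq> {1..k}" and l: "l \<in> {1..k}" "l' \<in> {1..k}"
    using h by auto
  have fin: "finite V" using sg by (simp add: simple_graph_def)
  have uF: "u \<notin> set W'" using d by simp
  have FV: "set (W' @ [u]) \<subseteq> V" and ind: "\<forall>x\<in>set (W' @ [u]). \<forall>y\<in>set (W' @ [u]). \<not> E x y"
    and c1: "card (nbrs V E u) = 1" using li by (auto simp: leaf_independent_def)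
  obtain vu where nu: "nbrs V E u = {vu}" using c1 card_1_singleton_iff by (metis One_nat_def)
  define c0 where "c0 = fcol W' L'"
  define V0 where "V0 = V - set (W' @ [u])"
  define P0 where "P0 = newp V E w (set W') c0"
  define x where "x = w {u, vu}"
  have Zeq: "Zr V E w k (W' @ [u]) (L' @ [m]) = Zp V0 E w (P0 + {#(vu, m, x)#})"
    and valm: "valid V0 E w (P0 + {#(vu, m, x)#})" if m: "m \<in> {1..k}" for m
  proof -
    have LL: "length (L' @ [m]) = length (W' @ [u])" "set (L' @ [m]) \<subseteq> {1..k}" using L m by auto
    have col: "\<forall>y\<in>set (W' @ [u]). fcol (W' @ [u]) (L' @ [m]) y \<in> {1..k}"
      using fcol_mem[OF d LL(1)] LL(2) by blast
    have np: "newp V E w (set (W' @ [u])) (fcol (W' @ [u]) (L' @ [m])) = P0 + {#(vu, m, x)#}"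
    proof -
      have "newp V E w (insert u (set W')) (fcol (W' @ [u]) (L' @ [m]))
          = newp V E w (set W') (fcol (W' @ [u]) (L' @ [m])) + {#(vu, fcol (W' @ [u]) (L' @ [m]) u, w {u,vu})#}"
        by (rule newp_insert[OF fin uF nu]) (use FV in auto)
      also have "newp V E w (set W') (fcol (W' @ [u]) (L' @ [m])) = P0"
        unfolding P0_def c0_def by (rule newp_cong) (use fcol_snoc(1)[OF L(1) uF] in auto)
      finally show ?thesis using fcol_snoc(2)[OF L(1) uF] by (simp add: x_def)
    qed
    show "Zr V E w k (W' @ [u]) (L' @ [m]) = Zp V0 E w (P0 + {#(vu, m, x)#})"
      using Zr_Zp[OF sg d li LL] np by (simp add: V0_def)
    show "valid V0 E w (P0 + {#(vu, m, x)#})"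
      using valid_trans[OF sg dg wt FV ind col] np by (simp add: V0_def)
  qed
  have nz: "Zp V0 E w (P0 + {#(vu, l', x)#}) \<noteq> 0" and Bp: "Bprop V0 E w (P0 + {#(vu, l', x)#})"
    using IH_valid[OF valm[OF l(2)]] by auto
  have "cmod (Zp V0 E w (P0 + {#(vu, l, x)#}) - Zp V0 E w (P0 + {#(vu, l', x)#}))
      \<le> K * cmod (Zp V0 E w (P0 + {#(vu, l', x)#}))"
    using Bp l(1) unfolding Bprop_def by blast
  from ratio_bound[OF nz this] show ?thesis unfolding Zeq[OF l(1)] Zeq[OF l(2)] .
qed


lemma C_final:
  assumes sg: "simple_graph V E" and dg: "max_deg_le V E \<Delta>" and wt: "\<forall>e\<in>edges V E. adm (w e)"
    and h: "distinct (W' @ [u]) \<and> u \<in> V \<and> leaf_independent V E (set W')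
            \<and> length L' = length W' \<and> set L' \<subseteq> {1..k}"
  shows "let d = free_deg V E W' u;
              b = real \<Delta> - real d;
              GN = good_cols V E k W' L' u \<union> neutral_cols V E w \<epsilon> k W' L' u
          in (\<forall>l \<in> GN. Zr V E w k (W' @ [u]) (L' @ [l]) \<noteq> 0)
           \<and> (\<forall>l \<in> GN. \<forall>l' \<in> GN.
                cangle (Zr V E w k (W' @ [u]) (L' @ [l])) (Zr V E w k (W' @ [u]) (L' @ [l']))
                  \<le> (real d + b * \<epsilon>) * \<theta>)
           \<and> (\<forall>l \<in> {1..k}. \<forall>j \<in> good_cols V E k W' L' u.
                cmod (Zr V E w k (W' @ [u]) (L' @ [l])) / cmod (Zr V E w k (W' @ [u]) (L' @ [j]))
                  \<le> \<epsilon> ^ mbad V E w \<epsilon> W' L' u l * (1 + K) ^ d)"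
proof -
  have d1: "distinct (W' @ [u])" and uV: "u \<in> V" and li: "leaf_independent V E (set W')"
    and L: "length L' = length W'" "set L' \<subseteq> {1..k}" using h by auto
  have fin: "finite V" and Ein: "\<forall>u v. E u v \<longrightarrow> u \<in> V \<and> v \<in> V \<and> u \<noteq> v \<and> E v u"
    using sg by (auto simp: simple_graph_def)
  have sym: "\<And>x y. E x y \<Longrightarrow> E y x" using Ein by auto
  have uF: "u \<notin> set W'" using d1 by simp
  have dW: "distinct W'" using d1 by simp
  have FV: "set W' \<subseteq> V" and ind: "\<forall>x\<in>set W'. \<forall>y\<in>set W'. \<not> E x y"
    using li by (auto simp: leaf_independent_def)
  define F where "F = set W'"
  define c0 where "c0 = fcol W' L'"
  define V' where "V' = V - F"
  define P where "P = newp V E w F c0"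
  define A where "A = {x\<in>F. E x u}"
  define Y where "Y = Yv V' E w P u"
  define Q where "Q = Qat P u"
  define d where "d = free_deg V E W' u"
  have col0: "\<forall>x\<in>F. c0 x \<in> {1..k}" using fcol_mem[OF dW L(1)] L(2) unfolding F_def c0_def by blast
  have valP: "valid V' E w P" unfolding V'_def P_def
    by (rule valid_trans[OF sg dg wt _ _ col0]) (use FV ind in \<open>auto simp: F_def\<close>)
  have uV': "u \<in> V'" using uV uF by (simp add: V'_def F_def)
  have fA: "finite A" using fin FV by (auto simp: A_def F_def intro: finite_subset)
  have dd: "d = card (nbrs V' E u)"
  proof -
    have "nbrs V' E u = {v \<in> V. E u v \<and> v \<notin> set W'}" by (auto simp: nbrs_def V'_def F_def)
    thus ?thesis by (simp add: d_def free_deg_def)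
  qed
  have Zfix: "Zr V E w k (W' @ [u]) (L' @ [l]) = cf Q l * Y l" if l: "l \<in> {1..k}" for l
  proof -
    have LL: "length (L' @ [l]) = length (W' @ [u])" "set (L' @ [l]) \<subseteq> {1..k}" using L l by auto
    define col where "col = fcol (W' @ [u]) (L' @ [l])"
    have colF: "\<forall>x\<in>F. col x \<in> {1..k}" using fcol_snoc(1)[OF L(1) uF] col0 by (auto simp: col_def F_def c0_def)
    have "Zr V E w k (W' @ [u]) (L' @ [l]) = ZZ V E w k {#} (set (W' @ [u])) col"
      unfolding col_def by (rule Zr_ZZ[OF d1 LL(1)])
    also have "\<dots> = pprod (filter_mset (\<lambda>p. fst p \<in> F) {#}) col *
      ZZ (V - F) E w k (filter_mset (\<lambda>p. fst p \<notin> F) {#} + newp V E w F col) (set (W' @ [u]) - F) col"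
      by (rule ZZ_reduce[OF fin _ _ _ _ colF]) (use FV ind Ein in \<open>auto simp: F_def\<close>)
    also have "\<dots> = ZZ V' E w k P {u} (\<lambda>_. l)"
    proof -
      have e1: "set (W' @ [u]) - F = {u}" using uF by (auto simp: F_def)
      have e2: "newp V E w F col = P" unfolding P_def
        by (rule newp_cong) (use fcol_snoc(1)[OF L(1) uF] in \<open>auto simp: col_def c0_def F_def\<close>)
      have e3: "ZZ V' E w k P {u} col = ZZ V' E w k P {u} (\<lambda>_. l)"
        by (rule ZZ_cu_cong) (simp add: col_def fcol_snoc(2)[OF L(1) uF])
      show ?thesis unfolding e1 e2 by (simp add: pprod_def V'_def[symmetric] e3)
    qed
    also have "\<dots> = cf Q l * Y l" unfolding Q_def Y_def by (rule ZZ_fix[OF valP uV' l])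
    finally show ?thesis .
  qed
  obtain \<psi> where Yk: "Yok d Y \<psi>" using Cstar[OF valP uV' IHn_all] by (auto simp: Y_def dd)
  have Qe: "Q = image_mset (\<lambda>x. (c0 x, w {x,u})) (mset_set A)"
    unfolding Q_def P_def A_def by (rule Qat_newp[OF fin _ uV]) (use FV in \<open>auto simp: F_def\<close>)
  have Qp: "\<forall>q\<in>#Q. fst q \<in> {1..k} \<and> adm (snd q)" unfolding Q_def by (rule Qat_props(1)[OF valP])
  have dQ: "d + size Q \<le> \<Delta>" using deg_u[OF valP uV'] Qat_props(2)[OF valP] by (simp add: dd Q_def)
  have Qball: "(\<forall>q\<in>#Q. Pr q) \<longleftrightarrow> (\<forall>x\<in>A. Pr (c0 x, w {x,u}))" for Pr using fA by (auto simp: Qe)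
  have Qbex: "(\<exists>q\<in>#Q. Pr q) \<longleftrightarrow> (\<exists>x\<in>A. Pr (c0 x, w {x,u}))" for Pr using fA by (auto simp: Qe)
  have Eu: "E u v \<longleftrightarrow> E v u" for v using sym by blast
  have good_iff: "l \<in> good_cols V E k W' L' u \<longleftrightarrow> l \<in> {1..k} \<and> (\<forall>q\<in>#Q. fst q \<noteq> l)" for l
    unfolding good_cols_def Qball A_def F_def c0_def using Eu by auto
  have bad_iff: "l \<in> bad_cols V E w \<epsilon> k W' L' u \<longleftrightarrow> l \<in> {1..k} \<and> (\<exists>q\<in>#Q. fst q = l \<and> cmod (snd q) \<le> \<epsilon>)" for l
    unfolding bad_cols_def Qbex A_def F_def c0_def using Eu by (auto simp: insert_commute)
  have GN_iff: "l \<in> good_cols V E k W' L' u \<union> neutral_cols V E w \<epsilon> k W' L' u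
      \<longleftrightarrow> l \<in> {1..k} \<and> (\<forall>q\<in>#Q. fst q = l \<longrightarrow> \<epsilon> < cmod (snd q))" for l
  proof -
    have "l \<in> good_cols V E k W' L' u \<union> neutral_cols V E w \<epsilon> k W' L' u \<longleftrightarrow>
        l \<in> {1..k} \<and> l \<notin> bad_cols V E w \<epsilon> k W' L' u"
      unfolding neutral_cols_def using good_iff bad_iff by auto
    thus ?thesis using bad_iff by force
  qed
  have Yl: "Y l \<noteq> 0" "Y l = rcis (cmod (Y l)) (\<psi> l)" if "l \<in> {1..k}" for l
    using Yk that by (auto simp: Yok_def)
  have part1: "Zr V E w k (W' @ [u]) (L' @ [l]) \<noteq> 0"
    if "l \<in> good_cols V E k W' L' u \<union> neutral_cols V E w \<epsilon> k W' L' u" for l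
  proof -
    have l: "l \<in> {1..k}" and nb: "\<forall>q\<in>#Q. fst q = l \<longrightarrow> \<epsilon> < cmod (snd q)" using GN_iff that by auto
    have "cf Q l \<noteq> 0" using cf_nb[OF _ nb] Qp by auto
    thus ?thesis using Zfix[OF l] Yl[OF l] by simp
  qed
  have part2: "cangle (Zr V E w k (W' @ [u]) (L' @ [l])) (Zr V E w k (W' @ [u]) (L' @ [l'])) \<le> phi d"
    if "l \<in> good_cols V E k W' L' u \<union> neutral_cols V E w \<epsilon> k W' L' u"
       "l' \<in> good_cols V E k W' L' u \<union> neutral_cols V E w \<epsilon> k W' L' u" for l l'
  proof -
    have l: "l \<in> {1..k}" "l' \<in> {1..k}" and nb: "\<forall>q\<in>#Q. fst q = l \<longrightarrow> \<epsilon> < cmod (snd q)"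
      "\<forall>q\<in>#Q. fst q = l' \<longrightarrow> \<epsilon> < cmod (snd q)" using GN_iff that by auto
    have Qa: "\<forall>q\<in>#Q. adm (snd q)" using Qp by auto
    obtain ta where ta: "cf Q l = rcis (cmod (cf Q l)) ta" "\<bar>ta\<bar> \<le> real (cnt Q l) * (\<epsilon> * \<theta>)" "cf Q l \<noteq> 0"
      using cf_nb[OF Qa nb(1)] by auto
    obtain tb where tb: "cf Q l' = rcis (cmod (cf Q l')) tb" "\<bar>tb\<bar> \<le> real (cnt Q l') * (\<epsilon> * \<theta>)" "cf Q l' \<noteq> 0"
      using cf_nb[OF Qa nb(2)] by auto
    have ga: "cf Q l * Y l = rcis (cmod (cf Q l) * cmod (Y l)) (ta + \<psi> l)"
      using ta(1) Yl(2)[OF l(1)] by (metis rcis_mult)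
    have gb: "cf Q l' * Y l' = rcis (cmod (cf Q l') * cmod (Y l')) (tb + \<psi> l')"
      using tb(1) Yl(2)[OF l(2)] by (metis rcis_mult)
    have pos: "0 < cmod (cf Q l) * cmod (Y l)" "0 < cmod (cf Q l') * cmod (Y l')"
      using ta(3) tb(3) Yl(1) l by auto
    have dle: "d \<le> \<Delta>" using dQ by simp
    show ?thesis
    proof (cases "l = l'")
      case True
      have "cangle (cf Q l * Y l) (cf Q l * Y l) = \<bar>(ta + \<psi> l) - (ta + \<psi> l)\<bar>"
        unfolding ga by (rule cangle_rcis) (use pos in auto)
      thus ?thesis using True Zfix[OF l(1)] phi_bounds(1)[OF dle] by simp
    next
      case False
      have ps: "\<bar>\<psi> l - \<psi> l'\<bar> \<le> real d * \<theta>" using Yk l by (auto simp: Yok_def)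
      have cc: "real (cnt Q l) + real (cnt Q l') \<le> real \<Delta> - real d"
        using cnt_pair[OF False, of Q] dQ by simp
      have "\<bar>(ta + \<psi> l) - (tb + \<psi> l')\<bar> \<le> \<bar>ta\<bar> + \<bar>tb\<bar> + \<bar>\<psi> l - \<psi> l'\<bar>" by simp
      also have "\<dots> \<le> (real (cnt Q l) + real (cnt Q l')) * (\<epsilon> * \<theta>) + real d * \<theta>"
        using ta(2) tb(2) ps by (simp add: algebra_simps)
      also have "\<dots> \<le> (real \<Delta> - real d) * (\<epsilon> * \<theta>) + real d * \<theta>"
        using cc eps theta_range by (intro add_right_mono mult_right_mono) auto
      also have "\<dots> = phi d" by (simp add: phi_def algebra_simps)
      finally have an: "\<bar>(ta + \<psi> l) - (tb + \<psi> l')\<bar> \<le> phi d" .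
      have "cangle (cf Q l * Y l) (cf Q l' * Y l') = \<bar>(ta + \<psi> l) - (tb + \<psi> l')\<bar>"
        unfolding ga gb by (rule cangle_rcis) (use pos an phi_le_pi[OF dle] in auto)
      thus ?thesis using an Zfix l by simp
    qed
  qed
  have part3: "cmod (Zr V E w k (W' @ [u]) (L' @ [l])) / cmod (Zr V E w k (W' @ [u]) (L' @ [j]))
                  \<le> \<epsilon> ^ mbad V E w \<epsilon> W' L' u l * (1 + K) ^ d"
    if l: "l \<in> {1..k}" and j: "j \<in> good_cols V E k W' L' u" for l j
  proof -
    have jk: "j \<in> {1..k}" and jg: "\<forall>q\<in>#Q. fst q \<noteq> j" using good_iff j by auto
    have cfj: "cf Q j = 1" by (rule cf_good[OF jg])
    define Bl where "Bl = {x\<in>A. c0 x = l \<and> cmod (w {x,u}) \<le> \<epsilon>}"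
    have mb: "mbad V E w \<epsilon> W' L' u l = card Bl"
    proof -
      have "{v \<in> set W'. E u v \<and> cmod (w {u, v}) \<le> \<epsilon> \<and> fcol W' L' v = l} = Bl"
        unfolding Bl_def A_def F_def c0_def using Eu by (auto simp: insert_commute)
      thus ?thesis by (simp add: mbad_def)
    qed
    have cfl: "cmod (cf Q l) \<le> \<epsilon> ^ card Bl"
    proof -
      have "cf Q l = (\<Prod>x\<in>A. if l = c0 x then w {x,u} else 1)" unfolding Qe by (rule cf_set[OF fA])
      hence "cmod (cf Q l) = (\<Prod>x\<in>A. cmod (if l = c0 x then w {x,u} else 1))" by (simp add: prod_norm)
      also have "\<dots> \<le> (\<Prod>x\<in>A. if x \<in> Bl then \<epsilon> else 1)"
      proof (rule prod_mono, rule conjI)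
        fix x assume xA: "x \<in> A"
        show "0 \<le> cmod (if l = c0 x then w {x,u} else 1)" by simp
        have "adm (w {x,u})"
        proof -
          have "x \<in> V" "E x u" using xA FV by (auto simp: A_def F_def)
          hence "{x,u} \<in> edges V E" using uV by (auto simp: edges_def)
          thus ?thesis using wt by auto
        qed
        hence "cmod (w {x,u}) \<le> 1" by (rule adm_le1)
        thus "cmod (if l = c0 x then w {x,u} else 1) \<le> (if x \<in> Bl then \<epsilon> else 1)"
          using xA by (auto simp: Bl_def)
      qed
      also have "\<dots> = \<epsilon> ^ card Bl"
      proof -
        have "Bl \<subseteq> A" by (auto simp: Bl_def)
        hence "(\<Prod>x\<in>A. if x \<in> Bl then \<epsilon> else 1) = (\<Prod>x\<in>Bl. \<epsilon>)"
          using fA by (simp add: prod.If_cases Int_absorb1)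
        thus ?thesis by simp
      qed
      finally show ?thesis .
    qed
    have Yr: "cmod (Y l) \<le> (1 + K) ^ d * cmod (Y j)" using Yk l jk by (auto simp: Yok_def)
    have Yj: "0 < cmod (Y j)" using Yl(1)[OF jk] by simp
    have "cmod (Zr V E w k (W' @ [u]) (L' @ [l])) / cmod (Zr V E w k (W' @ [u]) (L' @ [j]))
        = cmod (cf Q l) * (cmod (Y l) / cmod (Y j))"
      using Zfix[OF l] Zfix[OF jk] cfj by (simp add: norm_mult)
    also have "\<dots> \<le> \<epsilon> ^ card Bl * (1 + K) ^ d"
    proof (rule mult_mono)
      show "cmod (Y l) / cmod (Y j) \<le> (1 + K) ^ d" using Yr Yj by (simp add: divide_le_eq)
    qed (use cfl K eps in auto)
    finally show ?thesis unfolding mb .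
  qed
  show ?thesis
    unfolding Let_def d_def[symmetric]
    using part1 part2 part3 by (simp add: phi_def)
qed

end


theorem theorem5p1:
  fixes \<Delta> k :: nat and \<epsilon> K \<theta> :: real
    and V :: "'a set" and E :: "'a \<Rightarrow> 'a \<Rightarrow> bool" and w :: "'a set \<Rightarrow> complex"
  assumes Delta: "\<Delta> \<ge> 3"
    and k_gt: "k > \<Delta>"
    and eps: "0 < \<epsilon>" "\<epsilon> < 1"
    and K: "0 < K" "K < 1"
    and theta_def: "\<theta> = arcsin K"
    and theta_range: "0 < \<theta>" "\<theta> < pi / (3 * (real \<Delta> - 1 + \<epsilon>))"
    and cond1: "\<And>d. d \<le> \<Delta> - 2 \<Longrightarrow>
        (let b = real \<Delta> - real d;
             den = cos ((real d + b * \<epsilon>) * \<theta> / 2) * (real k - b) - \<epsilon> * b * (1 + K) ^ d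
         in den \<noteq> 0 \<and> (1 + \<epsilon>)\<^sup>2 * (1 + K) ^ d / den \<le> K)"
    and cond2: "\<And>d. d \<le> \<Delta> - 1 \<Longrightarrow>
        (let b = real \<Delta> - real d;
             den = cos ((real d + b * \<epsilon>) * \<theta> / 2) * (real k - b) - \<epsilon> * b * (1 + K) ^ d
         in den \<noteq> 0 \<and> fbound d K ((real d + b * \<epsilon>) * \<theta>) \<noteq> 0 \<and>
            (1 + \<epsilon>) * (1 + K) ^ d / den \<le> K / fbound d K ((real d + b * \<epsilon>) * \<theta>))"
    and G: "simple_graph V E"
    and deg: "max_deg_le V E \<Delta>"
    and weights: "\<forall>e \<in> edges V E. cmod (w e) \<le> \<epsilon> \<or>
                    (\<bar>Arg (w e)\<bar> \<le> \<epsilon> * \<theta> \<and> \<epsilon> < cmod (w e) \<and> cmod (w e) \<le> 1)"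
  shows
    "(\<forall>W L. distinct W \<and> leaf_independent V E (set W) \<and> length L = length W
            \<and> set L \<subseteq> {1..k} \<longrightarrow> Zr V E w k W L \<noteq> 0)
   \<and> (\<forall>W' u L' l l'. distinct (W' @ [u]) \<and> leaf_independent V E (set (W' @ [u]))
            \<and> length L' = length W' \<and> set L' \<subseteq> {1..k} \<and> l \<in> {1..k} \<and> l' \<in> {1..k} \<longrightarrow>
            cangle (Zr V E w k (W' @ [u]) (L' @ [l])) (Zr V E w k (W' @ [u]) (L' @ [l'])) \<le> \<theta>
          \<and> cmod (Zr V E w k (W' @ [u]) (L' @ [l])) / cmod (Zr V E w k (W' @ [u]) (L' @ [l']))
              \<le> 1 + K)
   \<and> (\<forall>W' u L'. distinct (W' @ [u]) \<and> u \<in> V \<and> leaf_independent V E (set W')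
            \<and> length L' = length W' \<and> set L' \<subseteq> {1..k} \<longrightarrow>
         (let d = free_deg V E W' u;
              b = real \<Delta> - real d;
              GN = good_cols V E k W' L' u \<union> neutral_cols V E w \<epsilon> k W' L' u
          in (\<forall>l \<in> GN. Zr V E w k (W' @ [u]) (L' @ [l]) \<noteq> 0)
           \<and> (\<forall>l \<in> GN. \<forall>l' \<in> GN.
                cangle (Zr V E w k (W' @ [u]) (L' @ [l])) (Zr V E w k (W' @ [u]) (L' @ [l']))
                  \<le> (real d + b * \<epsilon>) * \<theta>)
           \<and> (\<forall>l \<in> {1..k}. \<forall>j \<in> good_cols V E k W' L' u.
                cmod (Zr V E w k (W' @ [u]) (L' @ [l])) / cmod (Zr V E w k (W' @ [u]) (L' @ [j]))
                  \<le> \<epsilon> ^ mbad V E w \<epsilon> W' L' u l * (1 + K) ^ d)))"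
proof -
  interpret prm \<Delta> k \<epsilon> K \<theta>
    by (rule prm.intro[OF Delta k_gt eps K theta_def theta_range cond1 cond2])
  have wt: "\<forall>e\<in>edges V E. adm (w e)" using weights by (simp add: adm_def)
  show ?thesis
  proof (intro conjI)
    show "\<forall>W L. distinct W \<and> leaf_independent V E (set W) \<and> length L = length W
            \<and> set L \<subseteq> {1..k} \<longrightarrow> Zr V E w k W L \<noteq> 0"
      using A_final[OF G deg wt] by blast
    show "\<forall>W' u L' l l'. distinct (W' @ [u]) \<and> leaf_independent V E (set (W' @ [u]))
            \<and> length L' = length W' \<and> set L' \<subseteq> {1..k} \<and> l \<in> {1..k} \<and> l' \<in> {1..k} \<longrightarrow>
            cangle (Zr V E w k (W' @ [u]) (L' @ [l])) (Zr V E w k (W' @ [u]) (L' @ [l'])) \<le> \<theta>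
          \<and> cmod (Zr V E w k (W' @ [u]) (L' @ [l])) / cmod (Zr V E w k (W' @ [u]) (L' @ [l']))
              \<le> 1 + K"
      using B_final[OF G deg wt] by blast
    show "\<forall>W' u L'. distinct (W' @ [u]) \<and> u \<in> V \<and> leaf_independent V E (set W')
            \<and> length L' = length W' \<and> set L' \<subseteq> {1..k} \<longrightarrow>
         (let d = free_deg V E W' u;
              b = real \<Delta> - real d;
              GN = good_cols V E k W' L' u \<union> neutral_cols V E w \<epsilon> k W' L' u
          in (\<forall>l \<in> GN. Zr V E w k (W' @ [u]) (L' @ [l]) \<noteq> 0)
           \<and> (\<forall>l \<in> GN. \<forall>l' \<in> GN.
                cangle (Zr V E w k (W' @ [u]) (L' @ [l])) (Zr V E w k (W' @ [u]) (L' @ [l']))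
                  \<le> (real d + b * \<epsilon>) * \<theta>)
           \<and> (\<forall>l \<in> {1..k}. \<forall>j \<in> good_cols V E k W' L' u.
                cmod (Zr V E w k (W' @ [u]) (L' @ [l])) / cmod (Zr V E w k (W' @ [u]) (L' @ [j]))
                  \<le> \<epsilon> ^ mbad V E w \<epsilon> W' L' u l * (1 + K) ^ d))"
    proof (intro allI impI)
      fix W' u L'
      assume h: "distinct (W' @ [u]) \<and> u \<in> V \<and> leaf_independent V E (set W')
            \<and> length L' = length W' \<and> set L' \<subseteq> {1..k}"
      show "let d = free_deg V E W' u;
              b = real \<Delta> - real d;
              GN = good_cols V E k W' L' u \<union> neutral_cols V E w \<epsilon> k W' L' u
          in (\<forall>l \<in> GN. Zr V E w k (W' @ [u]) (L' @ [l]) \<noteq> 0)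
           \<and> (\<forall>l \<in> GN. \<forall>l' \<in> GN.
                cangle (Zr V E w k (W' @ [u]) (L' @ [l])) (Zr V E w k (W' @ [u]) (L' @ [l']))
                  \<le> (real d + b * \<epsilon>) * \<theta>)
           \<and> (\<forall>l \<in> {1..k}. \<forall>j \<in> good_cols V E k W' L' u.
                cmod (Zr V E w k (W' @ [u]) (L' @ [l])) / cmod (Zr V E w k (W' @ [u]) (L' @ [j]))
                  \<le> \<epsilon> ^ mbad V E w \<epsilon> W' L' u l * (1 + K) ^ d)"
        by (rule C_final[OF G deg wt h])
    qed
  qed
qed



end
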